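(* There is an absolute constant $C>0$ such that for every finite graph $G=(V,E)$ and every integer $r$ with $1\le r\le\log\vartheta(\overline G)$, \[K(r,G)\le C\,\frac{\log\vartheta(\overline G)}{r}.\]
   Context: For a finite graph $G=(V,E)$, a symmetric matrix $A\colon V\times V\to\mathbb{R}$ and a positive integer $r$, $\mathrm{SDP}_r(G,A)=\max\{\sum_{\{u,v\}\in E}A(u,v)f(u)\cdot f(v): f\colon V\to S^{r-1}\}$, with $S^{r-1}$ the unit sphere of $\mathbb{R}^r$, and $\mathrm{SDP}_\infty(G,A)$ is defined likewise with $f$ taking values in the unit sphere of $\ell^2$ (equivalently $\mathrm{SDP}_{|V|}(G,A)$). $K(r,G)$ is the smallest constant with $\mathrm{SDP}_\infty(G,A)\le K(r,G)\,\mathrm{SDP}_r(G,A)$ for all symmetric $A$. The theta number of the complement of $G$ is $\vartheta(\overline G)=\min\{\lambda: Z\in\mathbb{R}^{V\times V}\text{ positive semidefinite},\ Z(u,u)=\lambda-1\ (u\in V),\ Z(u,v)=-1\ (\{u,v\}\in E)\}$. *)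

theory Defs
  imports Complex_Main
begin

definition fin_graph :: "nat set \<Rightarrow> (nat \<times> nat) set \<Rightarrow> bool" where
  "fin_graph V E \<longleftrightarrow> finite V \<and> E \<subseteq> V \<times> V \<and> (\<forall>u v. (u,v) \<in> E \<longrightarrow> (v,u) \<in> E)
     \<and> (\<forall>u. (u,u) \<notin> E)"

definition edges :: "(nat \<times> nat) set \<Rightarrow> (nat \<times> nat) set" where
  "edges E = {(u,v). (u,v) \<in> E \<and> u < v}"

definition usphere :: "nat \<Rightarrow> (nat \<Rightarrow> real) set" where
  "usphere r = {x. (\<forall>i\<ge>r. x i = 0) \<and> (\<Sum>i<r. (x i)^2) = 1}"

definition ip :: "nat \<Rightarrow> (nat \<Rightarrow> real) \<Rightarrow> (nat \<Rightarrow> real) \<Rightarrow> real" where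
  "ip r x y = (\<Sum>i<r. x i * y i)"

definition sym_mat :: "nat set \<Rightarrow> (nat \<Rightarrow> nat \<Rightarrow> real) \<Rightarrow> bool" where
  "sym_mat V A \<longleftrightarrow> (\<forall>u\<in>V. \<forall>v\<in>V. A u v = A v u)"

definition SDP :: "nat \<Rightarrow> nat set \<Rightarrow> (nat \<times> nat) set \<Rightarrow> (nat \<Rightarrow> nat \<Rightarrow> real) \<Rightarrow> real" where
  "SDP r V E A = Sup {(\<Sum>(u,v)\<in>edges E. A u v * ip r (f u) (f v)) | f.
                       \<forall>u\<in>V. f u \<in> usphere r}"

text \<open>SDP_infinity, taken as SDP_{|V|} (equivalent to the l^2 version).\<close>
definition SDP_inf :: "nat set \<Rightarrow> (nat \<times> nat) set \<Rightarrow> (nat \<Rightarrow> nat \<Rightarrow> real) \<Rightarrow> real" where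
  "SDP_inf V E A = SDP (card V) V E A"

definition Kconst :: "nat \<Rightarrow> nat set \<Rightarrow> (nat \<times> nat) set \<Rightarrow> real" where
  "Kconst r V E = Inf {K. \<forall>A. sym_mat V A \<longrightarrow> SDP_inf V E A \<le> K * SDP r V E A}"

definition psd :: "nat set \<Rightarrow> (nat \<Rightarrow> nat \<Rightarrow> real) \<Rightarrow> bool" where
  "psd V Z \<longleftrightarrow> sym_mat V Z \<and> (\<forall>x. (\<Sum>u\<in>V. \<Sum>v\<in>V. x u * Z u v * x v) \<ge> 0)"

definition theta_compl :: "nat set \<Rightarrow> (nat \<times> nat) set \<Rightarrow> real" where
  "theta_compl V E = Inf {lam. \<exists>Z. psd V Z \<and> (\<forall>u\<in>V. Z u u = lam - 1)
                              \<and> (\<forall>(u,v)\<in>E. Z u v = -1)}"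

end

theory Submission imports Defs "HOL-Library.FuncSet" begin


definition obj :: "nat \<Rightarrow> (nat\<times>nat) set \<Rightarrow> (nat\<Rightarrow>nat\<Rightarrow>real) \<Rightarrow> (nat \<Rightarrow> nat \<Rightarrow> real) \<Rightarrow> real" where
  "obj r E A f = (\<Sum>(u,v)\<in>edges E. A u v * ip r (f u) (f v))"

lemma fin_edges: "fin_graph V E \<Longrightarrow> finite (edges E)"
proof -
  assume g: "fin_graph V E"
  hence "edges E \<subseteq> E" "E \<subseteq> V \<times> V" unfolding fin_graph_def edges_def by auto
  moreover have "finite (V \<times> V)" using g unfolding fin_graph_def by auto
  ultimately show ?thesis by (meson finite_subset)
qed

lemma edges_sub: "fin_graph V E \<Longrightarrow> (u,v) \<in> edges E \<Longrightarrow> u \<in> V \<and> v \<in> V \<and> u < v"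
  unfolding fin_graph_def edges_def by blast

lemma abs_ip_le: "\<bar>ip r x y\<bar> \<le> ((\<Sum>i<r. (x i)^2) + (\<Sum>i<r. (y i)^2)) / 2"
proof -
  have "\<bar>ip r x y\<bar> \<le> (\<Sum>i<r. \<bar>x i * y i\<bar>)" unfolding ip_def by (rule sum_abs)
  also have "\<dots> \<le> (\<Sum>i<r. ((x i)^2 + (y i)^2)/2)"
  proof (rule sum_mono)
    fix i
    have "0 \<le> (\<bar>x i\<bar> - \<bar>y i\<bar>)^2" by simp
    thus "\<bar>x i * y i\<bar> \<le> ((x i)^2 + (y i)^2)/2"
      by (simp add: power2_eq_square abs_mult algebra_simps)
  qed
  also have "\<dots> = ((\<Sum>i<r. (x i)^2) + (\<Sum>i<r. (y i)^2)) / 2"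
    by (simp add: sum.distrib flip: sum_divide_distrib)
  finally show ?thesis .
qed

lemma ip_sphere_le: "x \<in> usphere r \<Longrightarrow> y \<in> usphere r \<Longrightarrow> \<bar>ip r x y\<bar> \<le> 1"
proof -
  assume "x \<in> usphere r" "y \<in> usphere r"
  hence "(\<Sum>i<r. (x i)^2) = 1" "(\<Sum>i<r. (y i)^2) = 1" unfolding usphere_def by simp_all
  thus ?thesis using abs_ip_le[of r x y] by simp
qed

lemma obj_bound:
  assumes g: "fin_graph V E" and f: "\<forall>u\<in>V. f u \<in> usphere r"
  shows "obj r E A f \<le> (\<Sum>(u,v)\<in>edges E. \<bar>A u v\<bar>)"
proof -
  have "obj r E A f \<le> (\<Sum>(u,v)\<in>edges E. \<bar>A u v * ip r (f u) (f v)\<bar>)"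
    unfolding obj_def by (rule sum_mono) auto
  also have "\<dots> \<le> (\<Sum>(u,v)\<in>edges E. \<bar>A u v\<bar>)"
  proof (rule sum_mono)
    fix e assume e: "e \<in> edges E"
    obtain u v where uv: "e = (u,v)" by force
    from e g have "u \<in> V" "v \<in> V" using edges_sub uv by blast+
    hence "\<bar>ip r (f u) (f v)\<bar> \<le> 1" using f ip_sphere_le by blast
    hence "\<bar>A u v\<bar> * \<bar>ip r (f u) (f v)\<bar> \<le> \<bar>A u v\<bar>"
      by (simp add: mult_left_le)
    thus "(case e of (u,v) \<Rightarrow> \<bar>A u v * ip r (f u) (f v)\<bar>) \<le> (case e of (u,v) \<Rightarrow> \<bar>A u v\<bar>)"
      by (simp add: uv abs_mult)
  qed
  finally show ?thesis .
qed

definition e0 :: "nat \<Rightarrow> real" where "e0 = (\<lambda>i. if i = 0 then 1 else 0)"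

lemma e0_sphere: "r \<ge> 1 \<Longrightarrow> e0 \<in> usphere r"
proof -
  assume r: "r \<ge> 1"
  have "(\<Sum>i<r. (e0 i)^2) = (\<Sum>i<r. if i = 0 then 1 else 0)"
    by (rule sum.cong) (auto simp: e0_def)
  also have "\<dots> = 1" using r by (simp add: sum.delta)
  finally show ?thesis using r unfolding usphere_def by (auto simp: e0_def)
qed

lemma SDP_eq: "SDP r V E A = Sup {obj r E A f | f. \<forall>u\<in>V. f u \<in> usphere r}"
  unfolding SDP_def obj_def by (rule refl)

lemma SDP_upper:
  assumes g: "fin_graph V E" and f: "\<forall>u\<in>V. f u \<in> usphere r"
  shows "obj r E A f \<le> SDP r V E A"
  unfolding SDP_eq
proof (rule cSup_upper)
  show "obj r E A f \<in> {obj r E A f |f. \<forall>u\<in>V. f u \<in> usphere r}" using f by auto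
  show "bdd_above {obj r E A f |f. \<forall>u\<in>V. f u \<in> usphere r}"
  proof (rule bdd_aboveI)
    fix x assume "x \<in> {obj r E A f |f. \<forall>u\<in>V. f u \<in> usphere r}"
    then obtain f where "\<forall>u\<in>V. f u \<in> usphere r" "x = obj r E A f" by blast
    thus "x \<le> (\<Sum>(u,v)\<in>edges E. \<bar>A u v\<bar>)" using obj_bound[OF g] by blast
  qed
qed

lemma SDP_least:
  assumes r: "r \<ge> 1" and b: "\<And>f. \<forall>u\<in>V. f u \<in> usphere r \<Longrightarrow> obj r E A f \<le> B"
  shows "SDP r V E A \<le> B"
  unfolding SDP_eq
proof (rule cSup_least)
  show "{obj r E A f |f. \<forall>u\<in>V. f u \<in> usphere r} \<noteq> {}"
    using e0_sphere[OF r] by auto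
  fix x assume "x \<in> {obj r E A f |f. \<forall>u\<in>V. f u \<in> usphere r}"
  then obtain f where "\<forall>u\<in>V. f u \<in> usphere r" "x = obj r E A f" by blast
  thus "x \<le> B" using b by simp
qed


lemma ip_sum_right: "finite S \<Longrightarrow> ip r z (\<lambda>i. \<Sum>e\<in>S. g e i) = (\<Sum>e\<in>S. ip r z (g e))"
  unfolding ip_def by (simp add: sum_distrib_left sum.swap[of _ S])

lemma ip_add_right: "ip r z (\<lambda>i. x i + y i) = ip r z x + ip r z y"
  unfolding ip_def by (simp add: distrib_left sum.distrib)

lemma ip_cmult_right: "ip r z (\<lambda>i. c * x i) = c * ip r z x"
  unfolding ip_def by (simp add: sum_distrib_left mult_ac)

lemma ip_zero_left: "ip r (\<lambda>i. 0) x = 0" unfolding ip_def by simp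
lemma ip_zero_right: "ip r x (\<lambda>i. 0) = 0" unfolding ip_def by simp
lemma ip_comm: "ip r x y = ip r y x" unfolding ip_def by (simp add: mult_ac)

definition wv :: "(nat\<times>nat) set \<Rightarrow> (nat\<Rightarrow>nat\<Rightarrow>real) \<Rightarrow> (nat\<Rightarrow>nat\<Rightarrow>real) \<Rightarrow> nat \<Rightarrow> nat \<Rightarrow> real" where
  "wv E A y a = (\<lambda>i. \<Sum>(u,v)\<in>edges E. (if u = a then A u v * y v i else 0) + (if v = a then A u v * y u i else 0))"

lemma term_upd:
  fixes A y :: "nat \<Rightarrow> nat \<Rightarrow> real" and u v :: nat
  assumes "u < v"
  shows "A u v * ip r ((y(a:=z)) u) ((y(a:=z)) v) =
    A u v * ip r ((y(a:=(\<lambda>i. 0))) u) ((y(a:=(\<lambda>i. 0))) v)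
    + ip r z (\<lambda>i. (if u = a then A u v * y v i else 0) + (if v = a then A u v * y u i else 0))"
proof -
  have "u \<noteq> v" using assms by simp
  show ?thesis
  proof (cases "u = a")
    case True
    hence "v \<noteq> a" using \<open>u \<noteq> v\<close> by simp
    thus ?thesis using True
      by (simp add: ip_zero_left ip_add_right ip_cmult_right ip_zero_right)
  next
    case False
    thus ?thesis
      by (cases "v = a") (simp_all add: ip_zero_right ip_add_right ip_cmult_right ip_comm)
  qed
qed

lemma obj_upd:
  assumes g: "fin_graph V E"
  shows "obj r E A (y(a:=z)) = obj r E A (y(a:=(\<lambda>i. 0))) + ip r z (wv E A y a)"
proof -
  have fin: "finite (edges E)" using fin_edges[OF g] .
  have "obj r E A (y(a:=z)) = (\<Sum>e\<in>edges E. A (fst e) (snd e) * ip r ((y(a:=(\<lambda>i. 0))) (fst e)) ((y(a:=(\<lambda>i. 0))) (snd e))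
    + ip r z (\<lambda>i. (if fst e = a then A (fst e) (snd e) * y (snd e) i else 0) + (if snd e = a then A (fst e) (snd e) * y (fst e) i else 0)))"
    unfolding obj_def
  proof (rule sum.cong)
    fix e assume "e \<in> edges E"
    then obtain u v where e: "e = (u,v)" "u < v" unfolding edges_def by auto
    show "(case e of (u, v) \<Rightarrow> A u v * ip r ((y(a := z)) u) ((y(a := z)) v)) = A (fst e) (snd e) * ip r ((y(a:=(\<lambda>i. 0))) (fst e)) ((y(a:=(\<lambda>i. 0))) (snd e))
    + ip r z (\<lambda>i. (if fst e = a then A (fst e) (snd e) * y (snd e) i else 0) + (if snd e = a then A (fst e) (snd e) * y (fst e) i else 0))"
      using term_upd[OF e(2), of A r y a z] unfolding e(1) fst_conv snd_conv prod.case by simp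
  qed simp
  also have "\<dots> = obj r E A (y(a:=(\<lambda>i. 0))) + (\<Sum>e\<in>edges E. ip r z (\<lambda>i. (if fst e = a then A (fst e) (snd e) * y (snd e) i else 0) + (if snd e = a then A (fst e) (snd e) * y (fst e) i else 0)))"
    unfolding obj_def sum.distrib by (simp add: case_prod_beta)
  also have "(\<Sum>e\<in>edges E. ip r z (\<lambda>i. (if fst e = a then A (fst e) (snd e) * y (snd e) i else 0) + (if snd e = a then A (fst e) (snd e) * y (fst e) i else 0)))
     = ip r z (wv E A y a)"
    unfolding wv_def case_prod_beta using ip_sum_right[OF fin, symmetric] by simp
  finally show ?thesis .
qed

lemma norm_dot_le:
  assumes y: "(\<Sum>i<r. (y i)^2) \<le> 1" and nw: "nw = sqrt (\<Sum>i<r. (w i)^2)" and pos: "nw > 0"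
  shows "ip r y w \<le> nw"
proof -
  let ?z = "\<lambda>i. w i / nw"
  have z2: "(\<Sum>i<r. (?z i)^2) = 1"
  proof -
    have "(\<Sum>i<r. (?z i)^2) = (\<Sum>i<r. (w i)^2) / nw^2"
      by (simp add: power_divide sum_divide_distrib)
    also have "nw^2 = (\<Sum>i<r. (w i)^2)" using nw by (simp add: sum_nonneg)
    finally show ?thesis using pos nw by simp
  qed
  have "ip r y ?z \<le> 1" using abs_ip_le[of r y ?z] y z2 by simp
  moreover have "ip r y w = nw * ip r y ?z"
    unfolding ip_def using pos by (simp add: sum_distrib_left field_simps)
  ultimately show ?thesis using pos by (simp add: mult_le_cancel_left1)
qed

lemma ball_step:
  assumes g: "fin_graph V E" and r: "r \<ge> 1" and ya: "(\<Sum>i<r. (y a i)^2) \<le> 1"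
  shows "\<exists>z \<in> usphere r. obj r E A y \<le> obj r E A (y(a:=z))"
proof -
  define w where "w = wv E A y a"
  define nw where "nw = sqrt (\<Sum>i<r. (w i)^2)"
  have base: "\<And>z. obj r E A (y(a:=z)) = obj r E A (y(a:=(\<lambda>i. 0))) + ip r z w"
    using obj_upd[OF g] unfolding w_def by blast
  have y_eq: "obj r E A y = obj r E A (y(a:=(\<lambda>i. 0))) + ip r (y a) w"
    using base[of "y a"] by simp
  show ?thesis
  proof (cases "nw = 0")
    case True
    hence "(\<Sum>i<r. (w i)^2) = 0" unfolding nw_def by simp
    hence "\<forall>i\<in>{..<r}. (w i)^2 = 0" by (subst (asm) sum_nonneg_eq_0_iff) auto
    hence w0: "\<And>i. i < r \<Longrightarrow> w i = 0" by auto
    have "\<And>x. ip r x w = 0" unfolding ip_def using w0 by simp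
    hence "obj r E A y \<le> obj r E A (y(a:=e0))" using y_eq base[of e0] by simp
    thus ?thesis using e0_sphere[OF r] by blast
  next
    case False
    hence pos: "nw > 0" unfolding nw_def by (simp add: sum_nonneg order.strict_iff_order)
    define z where "z = (\<lambda>i. if i < r then w i / nw else 0)"
    have z2: "(\<Sum>i<r. (z i)^2) = 1"
    proof -
      have "(\<Sum>i<r. (z i)^2) = (\<Sum>i<r. (w i)^2) / nw^2"
        unfolding z_def by (simp add: power_divide sum_divide_distrib)
      also have "nw^2 = (\<Sum>i<r. (w i)^2)" using nw_def by (simp add: sum_nonneg)
      finally show ?thesis using pos nw_def by simp
    qed
    hence zs: "z \<in> usphere r" unfolding usphere_def z_def by auto
    have "ip r z w = (\<Sum>i<r. (w i)^2) / nw" unfolding ip_def z_def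
      by (simp add: power2_eq_square sum_divide_distrib)
    also have "\<dots> = nw" unfolding nw_def by (rule real_div_sqrt) (simp add: sum_nonneg)
    finally have "ip r z w = nw" .
    moreover have "ip r (y a) w \<le> nw" using norm_dot_le[OF ya nw_def pos] .
    ultimately have "obj r E A y \<le> obj r E A (y(a:=z))" using y_eq base[of z] by simp
    thus ?thesis using zs by blast
  qed
qed

lemma ball_lemma_aux:
  assumes g: "fin_graph V E" and r: "r \<ge> 1" and W: "finite W" "W \<subseteq> V"
  shows "\<forall>y. (\<forall>u\<in>V. (\<Sum>i<r. (y u i)^2) \<le> 1) \<and> (\<forall>u\<in>V-W. y u \<in> usphere r) \<longrightarrow>
     (\<exists>f. (\<forall>u\<in>V. f u \<in> usphere r) \<and> obj r E A y \<le> obj r E A f)"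
  using W
proof (induction W rule: finite_induct)
  case empty
  thus ?case by auto
next
  case (insert a W)
  show ?case
  proof (intro allI impI)
    fix y assume y: "(\<forall>u\<in>V. (\<Sum>i<r. (y u i)^2) \<le> 1) \<and> (\<forall>u\<in>V - insert a W. y u \<in> usphere r)"
    have aV: "a \<in> V" using insert by auto
    obtain z where z: "z \<in> usphere r" "obj r E A y \<le> obj r E A (y(a:=z))"
      using ball_step[OF g r, of y a A] y aV by auto
    have "(\<forall>u\<in>V. (\<Sum>i<r. ((y(a:=z)) u i)^2) \<le> 1) \<and> (\<forall>u\<in>V - W. (y(a:=z)) u \<in> usphere r)"
      using y z(1) unfolding usphere_def by auto
    then obtain f where "(\<forall>u\<in>V. f u \<in> usphere r)" "obj r E A (y(a:=z)) \<le> obj r E A f"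
      using insert.IH insert.prems by blast
    thus "\<exists>f. (\<forall>u\<in>V. f u \<in> usphere r) \<and> obj r E A y \<le> obj r E A f" using z(2) by force
  qed
qed

lemma ball_lemma:
  assumes g: "fin_graph V E" and r: "r \<ge> 1" and y: "\<forall>u\<in>V. (\<Sum>i<r. (y u i)^2) \<le> 1"
  shows "obj r E A y \<le> SDP r V E A"
proof -
  have fV: "finite V" using g unfolding fin_graph_def by simp
  obtain f where "(\<forall>u\<in>V. f u \<in> usphere r)" "obj r E A y \<le> obj r E A f"
    using ball_lemma_aux[OF g r fV subset_refl, of A] y by auto
  thus ?thesis using SDP_upper[OF g] by (meson order_trans)
qed


lemma quad_insert:
  fixes f :: "nat \<Rightarrow> nat \<Rightarrow> real"
  assumes "finite W" "a \<notin> W"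
  shows "(\<Sum>u\<in>insert a W. \<Sum>v\<in>insert a W. f u v) = f a a + (\<Sum>v\<in>W. f a v) + (\<Sum>u\<in>W. f u a) + (\<Sum>u\<in>W. \<Sum>v\<in>W. f u v)"
  using assms by (simp add: sum.insert sum.distrib)

definition quad :: "nat set \<Rightarrow> (nat \<Rightarrow> nat \<Rightarrow> real) \<Rightarrow> (nat \<Rightarrow> real) \<Rightarrow> real" where
  "quad V M x = (\<Sum>u\<in>V. \<Sum>v\<in>V. x u * M u v * x v)"

lemma psd_iff: "psd V M \<longleftrightarrow> sym_mat V M \<and> (\<forall>x. quad V M x \<ge> 0)"
  unfolding psd_def quad_def by simp

lemma quad_insert_x:
  assumes "finite W" "a \<notin> W"
  shows "quad (insert a W) M x = x a * M a a * x a + (\<Sum>v\<in>W. x a * M a v * x v) + (\<Sum>u\<in>W. x u * M u a * x a) + quad W M x"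
  unfolding quad_def using quad_insert[OF assms] by simp

lemma quad_cong: "(\<And>u. u \<in> W \<Longrightarrow> x u = y u) \<Longrightarrow> quad W M x = quad W M y"
  unfolding quad_def by (intro sum.cong refl) auto

lemma psd_sym: "psd V M \<Longrightarrow> u \<in> V \<Longrightarrow> v \<in> V \<Longrightarrow> M u v = M v u"
  unfolding psd_def sym_mat_def by blast

lemma sum_single:
  fixes f :: "nat \<Rightarrow> real"
  assumes "finite W" "v \<in> W" "\<And>w. w \<in> W \<Longrightarrow> w \<noteq> v \<Longrightarrow> f w = 0"
  shows "(\<Sum>w\<in>W. f w) = f v"
proof -
  have "(\<Sum>w\<in>W. f w) = f v + (\<Sum>w\<in>W-{v}. f w)" using assms(1,2) by (rule sum.remove)
  also have "(\<Sum>w\<in>W-{v}. f w) = 0" by (rule sum.neutral) (use assms(3) in auto)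
  finally show ?thesis by simp
qed

lemma psd_zero_diag:
  assumes fin: "finite W" "a \<notin> W" and p: "psd (insert a W) M" and z: "M a a = 0" and v: "v \<in> W"
  shows "M a v = 0"
proof (rule ccontr)
  assume ne: "M a v \<noteq> 0"
  have sym: "M v a = M a v" using psd_sym[OF p] v by simp
  define t where "t = - (M v v + 1) / (2 * M a v)"
  define x where "x = (\<lambda>u. if u = a then t else if u = v then 1 else (0::real))"
  have va: "v \<noteq> a" using fin v by auto
  have xa: "x a = t" and xv: "x v = 1" using va unfolding x_def by auto
  have x0: "\<And>w. w \<in> W \<Longrightarrow> w \<noteq> v \<Longrightarrow> x w = 0" unfolding x_def using fin by auto
  have "quad (insert a W) M x = x a * M a a * x a + (\<Sum>w\<in>W. x a * M a w * x w) + (\<Sum>u\<in>W. x u * M u a * x a) + quad W M x"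
    by (rule quad_insert_x[OF fin])
  also have "(\<Sum>w\<in>W. x a * M a w * x w) = x a * M a v * x v"
    by (rule sum_single[OF fin(1) v]) (use x0 in auto)
  also have "(\<Sum>u\<in>W. x u * M u a * x a) = x v * M v a * x a"
    by (rule sum_single[OF fin(1) v]) (use x0 in auto)
  also have "quad W M x = (\<Sum>v'\<in>W. x v * M v v' * x v')"
    unfolding quad_def by (rule sum_single[OF fin(1) v]) (use x0 in auto)
  also have "(\<Sum>v'\<in>W. x v * M v v' * x v') = x v * M v v * x v"
    by (rule sum_single[OF fin(1) v]) (use x0 in auto)
  finally have "quad (insert a W) M x = 2 * t * M a v + M v v" using z xa xv sym by simp
  also have "\<dots> = -1" using ne unfolding t_def by (simp add: field_simps)
  finally have q: "quad (insert a W) M x = -1" .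
  have "quad (insert a W) M x \<ge> 0" using p unfolding psd_iff by blast
  thus False using q by simp
qed

lemma gram_fact:
  assumes "finite V"
  shows "\<forall>M. psd V M \<longrightarrow> (\<exists>g. (\<forall>u\<in>V. \<forall>i\<ge>card V. g u i = 0) \<and> (\<forall>u\<in>V. \<forall>v\<in>V. M u v = ip (card V) (g u) (g v)))"
  using assms
proof (induction V rule: finite_induct)
  case empty
  show ?case by auto
next
  case (insert a W)
  note fin = insert(1,2)
  show ?case
  proof (intro allI impI)
    fix M assume p: "psd (insert a W) M"
    have sym: "\<And>u v. u \<in> insert a W \<Longrightarrow> v \<in> insert a W \<Longrightarrow> M u v = M v u"
      using psd_sym[OF p] by blast
    have cn: "card (insert a W) = Suc (card W)" using fin by simp
    have ipS: "\<And>x y. ip (Suc (card W)) x y = ip (card W) x y + x (card W) * y (card W)"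
      unfolding ip_def by simp
    show "\<exists>g. (\<forall>u\<in>insert a W. \<forall>i\<ge>card (insert a W). g u i = 0) \<and>
             (\<forall>u\<in>insert a W. \<forall>v\<in>insert a W. M u v = ip (card (insert a W)) (g u) (g v))"
    proof (cases "M a a = 0")
      case True
      have row: "\<And>v. v \<in> W \<Longrightarrow> M a v = 0" using psd_zero_diag[OF fin p True] by blast
      have pW: "psd W M"
        unfolding psd_iff
      proof
        show "sym_mat W M" using sym unfolding sym_mat_def by auto
        show "\<forall>x. 0 \<le> quad W M x"
        proof
          fix x
          have "quad (insert a W) M (x(a:=0)) = quad W M (x(a:=0))"
            using quad_insert_x[OF fin, of M "x(a:=0)"] by simp
          also have "\<dots> = quad W M x" by (rule quad_cong) (use fin in auto)
          finally show "0 \<le> quad W M x" using p unfolding psd_iff by metis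
        qed
      qed
      obtain g' where g': "\<forall>u\<in>W. \<forall>i\<ge>card W. g' u i = 0" "\<forall>u\<in>W. \<forall>v\<in>W. M u v = ip (card W) (g' u) (g' v)"
        using insert.IH pW by blast
      define g where "g = (\<lambda>u. if u = a then (\<lambda>i. 0) else g' u)"
      show ?thesis
      proof (intro exI[of _ g] conjI ballI allI impI)
        fix u i assume "u \<in> insert a W" "card (insert a W) \<le> i"
        thus "g u i = 0" using g' cn unfolding g_def by auto
      next
        fix u v assume uv: "u \<in> insert a W" "v \<in> insert a W"
        have g0: "\<And>u. u \<in> W \<Longrightarrow> g' u (card W) = 0" using g' by auto
        show "M u v = ip (card (insert a W)) (g u) (g v)"
          unfolding cn ipS
        proof (cases "u = a"; cases "v = a")
          assume "u = a" "v = a" thus "M u v = ip (card W) (g u) (g v) + g u (card W) * g v (card W)"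
            using True by (simp add: g_def ip_def)
        next
          assume "u = a" "v \<noteq> a" thus "M u v = ip (card W) (g u) (g v) + g u (card W) * g v (card W)"
            using row uv by (simp add: g_def ip_def)
        next
          assume a: "u \<noteq> a" "v = a"
          hence "u \<in> W" using uv by simp
          hence "M u v = 0" using a row[of u] sym[of u a] uv by simp
          thus "M u v = ip (card W) (g u) (g v) + g u (card W) * g v (card W)"
            using a by (simp add: g_def ip_def)
        next
          assume a: "u \<noteq> a" "v \<noteq> a"
          hence W: "u \<in> W" "v \<in> W" using uv by auto
          have "g u = g' u" "g v = g' v" using a unfolding g_def by auto
          moreover have "g' u (card W) = 0" using g0 W by blast
          moreover have "M u v = ip (card W) (g' u) (g' v)" using g'(2) W by blast
          ultimately show "M u v = ip (card W) (g u) (g v) + g u (card W) * g v (card W)"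
            by simp
        qed
      qed
    next
      case False
      have pos: "M a a > 0"
      proof -
        define x1 where "x1 = (\<lambda>u. if u = a then 1 else (0::real))"
        have x0: "\<And>u. u \<in> W \<Longrightarrow> x1 u = 0" unfolding x1_def using fin by auto
        have "quad (insert a W) M x1 = x1 a * M a a * x1 a + (\<Sum>v\<in>W. x1 a * M a v * x1 v) + (\<Sum>u\<in>W. x1 u * M u a * x1 a) + quad W M x1"
          by (rule quad_insert_x[OF fin])
        also have "(\<Sum>v\<in>W. x1 a * M a v * x1 v) = 0" by (rule sum.neutral) (use x0 in auto)
        also have "(\<Sum>u\<in>W. x1 u * M u a * x1 a) = 0" by (rule sum.neutral) (use x0 in auto)
        also have "quad W M x1 = 0" unfolding quad_def by (rule sum.neutral) (use x0 in auto)
        finally have "quad (insert a W) M x1 = M a a" by (simp add: x1_def)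
        hence "M a a \<ge> 0" using p unfolding psd_iff by metis
        thus ?thesis using False by simp
      qed
      define M' where "M' = (\<lambda>u v. M u v - M u a * M a v / M a a)"
      have pW: "psd W M'"
        unfolding psd_iff
      proof
        show "sym_mat W M'" using sym unfolding sym_mat_def M'_def by (auto simp: mult.commute)
        show "\<forall>x. 0 \<le> quad W M' x"
        proof
          fix x
          define s where "s = (\<Sum>v\<in>W. M a v * x v)"
          define x' where "x' = x(a := - s / M a a)"
          have xW: "\<And>u. u \<in> W \<Longrightarrow> x' u = x u" unfolding x'_def using fin by auto
          have s2: "(\<Sum>u\<in>W. x u * M u a) = s"
            unfolding s_def by (rule sum.cong) (use sym in \<open>auto simp: mult.commute\<close>)
          have "quad (insert a W) M x' = x' a * M a a * x' a + (\<Sum>v\<in>W. x' a * M a v * x' v) + (\<Sum>u\<in>W. x' u * M u a * x' a) + quad W M x'"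
            by (rule quad_insert_x[OF fin])
          also have "(\<Sum>v\<in>W. x' a * M a v * x' v) = x' a * s"
            unfolding s_def sum_distrib_left using xW by (intro sum.cong) auto
          also have "(\<Sum>u\<in>W. x' u * M u a * x' a) = s * x' a"
            unfolding s2[symmetric] sum_distrib_right using xW by (intro sum.cong) auto
          also have "quad W M x' = quad W M x" by (rule quad_cong) (use xW in auto)
          also have "x' a = - s / M a a" unfolding x'_def by simp
          finally have q1: "quad (insert a W) M x' = quad W M x - s^2 / M a a"
            using pos by (simp add: field_simps power2_eq_square)
          have "quad W M' x = quad W M x - (\<Sum>u\<in>W. \<Sum>v\<in>W. (x u * M u a) * (M a v * x v)) / M a a"
            unfolding quad_def M'_def
            by (simp add: algebra_simps sum_subtractf sum_divide_distrib)
          also have "(\<Sum>u\<in>W. \<Sum>v\<in>W. (x u * M u a) * (M a v * x v)) = s^2"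
          proof -
            have "(\<Sum>u\<in>W. \<Sum>v\<in>W. (x u * M u a) * (M a v * x v)) = (\<Sum>u\<in>W. x u * M u a) * (\<Sum>v\<in>W. M a v * x v)"
              by (simp add: sum_product)
            thus ?thesis using s2 s_def by (simp add: power2_eq_square)
          qed
          finally have "quad W M' x = quad (insert a W) M x'" using q1 by simp
          thus "0 \<le> quad W M' x" using p unfolding psd_iff by metis
        qed
      qed
      obtain g' where g': "\<forall>u\<in>W. \<forall>i\<ge>card W. g' u i = 0" "\<forall>u\<in>W. \<forall>v\<in>W. M' u v = ip (card W) (g' u) (g' v)"
        using insert.IH pW by blast
      define q where "q = sqrt (M a a)"
      have qpos: "q > 0" and qq: "q * q = M a a" unfolding q_def using pos by auto
      define g where "g = (\<lambda>u. if u = a then (\<lambda>i. if i = card W then q else 0)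
                                else (\<lambda>i. if i = card W then M u a / q else g' u i))"
      have ipa: "\<And>x. ip (card W) (\<lambda>i. if i = card W then q else 0) x = 0" unfolding ip_def by simp
      have ipW: "\<And>u v. u \<in> W \<Longrightarrow> v \<in> W \<Longrightarrow> ip (card W) (g u) (g v) = ip (card W) (g' u) (g' v)"
        unfolding ip_def g_def using fin by (intro sum.cong) auto
      show ?thesis
      proof (intro exI[of _ g] conjI ballI allI impI)
        fix u i assume "u \<in> insert a W" "card (insert a W) \<le> i"
        thus "g u i = 0" using g' cn unfolding g_def by auto
      next
        fix u v assume uv: "u \<in> insert a W" "v \<in> insert a W"
        show "M u v = ip (card (insert a W)) (g u) (g v)"
          unfolding cn ipS
        proof (cases "u = a"; cases "v = a")
          assume "u = a" "v = a" thus "M u v = ip (card W) (g u) (g v) + g u (card W) * g v (card W)"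
            using qq ipa by (simp add: g_def)
        next
          assume a: "u = a" "v \<noteq> a"
          have "ip (card W) (g u) (g v) = 0" using a ipa by (simp add: g_def)
          thus "M u v = ip (card W) (g u) (g v) + g u (card W) * g v (card W)"
            using a uv sym qpos by (simp add: g_def)
        next
          assume a: "u \<noteq> a" "v = a"
          have "ip (card W) (g u) (g v) = ip (card W) (g v) (g u)" by (rule ip_comm)
          also have "\<dots> = 0" using a ipa by (simp add: g_def)
          finally have "ip (card W) (g u) (g v) = 0" .
          thus "M u v = ip (card W) (g u) (g v) + g u (card W) * g v (card W)"
            using a uv sym qpos by (simp add: g_def)
        next
          assume a: "u \<noteq> a" "v \<noteq> a"
          hence W: "u \<in> W" "v \<in> W" using uv by auto
          have "M u v = M' u v + M u a * M a v / M a a" unfolding M'_def by simp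
          also have "M' u v = ip (card W) (g u) (g v)" using g'(2) W ipW by simp
          also have "M u a * M a v / M a a = g u (card W) * g v (card W)"
            using a W sym[of a v] qq qpos by (simp add: g_def field_simps)
          finally show "M u v = ip (card W) (g u) (g v) + g u (card W) * g v (card W)" .
        qed
      qed
    qed
  qed
qed

lemma psd_bound:
  assumes g: "fin_graph V E" and V: "V \<noteq> {}" and p: "psd V M" and D: "D > 0"
    and diag: "\<forall>u\<in>V. M u u \<le> D"
  shows "(\<Sum>(u,v)\<in>edges E. A u v * M u v) \<le> D * SDP_inf V E A"
proof -
  have fV: "finite V" using g unfolding fin_graph_def by simp
  hence n1: "card V \<ge> 1" using V by (simp add: Suc_le_eq card_gt_0_iff)
  obtain h where h: "\<forall>u\<in>V. \<forall>v\<in>V. M u v = ip (card V) (h u) (h v)"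
    using gram_fact[OF fV] p by blast
  define y where "y = (\<lambda>u i. h u i / sqrt D)"
  have yb: "\<forall>u\<in>V. (\<Sum>i<card V. (y u i)^2) \<le> 1"
  proof
    fix u assume u: "u \<in> V"
    have "(\<Sum>i<card V. (y u i)^2) = ip (card V) (h u) (h u) / D"
      unfolding y_def ip_def sum_divide_distrib
    proof (rule sum.cong)
      fix i show "(h u i / sqrt D)^2 = h u i * h u i / D" using D
        by (simp add: power_divide power2_eq_square)
    qed simp
    also have "\<dots> = M u u / D" using h u by metis
    also have "\<dots> \<le> 1" using diag u D by simp
    finally show "(\<Sum>i<card V. (y u i)^2) \<le> 1" .
  qed
  have "obj (card V) E A y \<le> SDP (card V) V E A" by (rule ball_lemma[OF g n1 yb])
  moreover have "obj (card V) E A y = (\<Sum>(u,v)\<in>edges E. A u v * M u v) / D"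
    unfolding obj_def sum_divide_distrib
  proof (rule sum.cong)
    fix e assume e: "e \<in> edges E"
    obtain u v where uv: "e = (u,v)" by force
    have "u \<in> V" "v \<in> V" using edges_sub[OF g] e uv by auto
    hence hm: "M u v = ip (card V) (h u) (h v)" using h by blast
    have "ip (card V) (y u) (y v) = ip (card V) (h u) (h v) / D"
      unfolding y_def ip_def sum_divide_distrib
    proof (rule sum.cong)
      fix i show "h u i / sqrt D * (h v i / sqrt D) = h u i * h v i / D" using D
        by (simp add: field_simps)
    qed simp
    hence "ip (card V) (y u) (y v) = M u v / D" using hm by simp
    thus "(case e of (u, v) \<Rightarrow> A u v * ip (card V) (y u) (y v)) = (case e of (u, v) \<Rightarrow> A u v * M u v) / D"
      by (simp add: uv)
  qed simp
  ultimately show ?thesis unfolding SDP_inf_def using D by (simp add: field_simps)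
qed


lemma quad_gram:
  assumes "finite V" "finite I"
  shows "quad V (\<lambda>u v. \<Sum>k\<in>I. p u k * p v k) x = (\<Sum>k\<in>I. (\<Sum>u\<in>V. x u * p u k)^2)"
proof -
  have "quad V (\<lambda>u v. \<Sum>k\<in>I. p u k * p v k) x = (\<Sum>u\<in>V. \<Sum>v\<in>V. \<Sum>k\<in>I. (x u * p u k) * (x v * p v k))"
    unfolding quad_def by (simp add: sum_distrib_left sum_distrib_right mult_ac)
  also have "\<dots> = (\<Sum>k\<in>I. \<Sum>u\<in>V. \<Sum>v\<in>V. (x u * p u k) * (x v * p v k))"
  proof -
    have "\<And>u. (\<Sum>v\<in>V. \<Sum>k\<in>I. (x u * p u k) * (x v * p v k)) = (\<Sum>k\<in>I. \<Sum>v\<in>V. (x u * p u k) * (x v * p v k))"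
      by (rule sum.swap)
    hence "(\<Sum>u\<in>V. \<Sum>v\<in>V. \<Sum>k\<in>I. (x u * p u k) * (x v * p v k)) = (\<Sum>u\<in>V. \<Sum>k\<in>I. \<Sum>v\<in>V. (x u * p u k) * (x v * p v k))"
      by simp
    also have "\<dots> = (\<Sum>k\<in>I. \<Sum>u\<in>V. \<Sum>v\<in>V. (x u * p u k) * (x v * p v k))" by (rule sum.swap)
    finally show ?thesis .
  qed
  also have "\<dots> = (\<Sum>k\<in>I. (\<Sum>u\<in>V. x u * p u k)^2)"
    by (simp add: power2_eq_square sum_product)
  finally show ?thesis .
qed

lemma quad_schur:
  assumes "finite V" "finite I"
  shows "quad V (\<lambda>u v. Z u v * (\<Sum>k\<in>I. q u k * q v k)) x = (\<Sum>k\<in>I. quad V Z (\<lambda>u. x u * q u k))"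
proof -
  have "quad V (\<lambda>u v. Z u v * (\<Sum>k\<in>I. q u k * q v k)) x = (\<Sum>u\<in>V. \<Sum>v\<in>V. \<Sum>k\<in>I. (x u * q u k) * Z u v * (x v * q v k))"
    unfolding quad_def by (simp add: sum_distrib_left sum_distrib_right mult_ac)
  also have "\<dots> = (\<Sum>k\<in>I. \<Sum>u\<in>V. \<Sum>v\<in>V. (x u * q u k) * Z u v * (x v * q v k))"
  proof -
    have "\<And>u. (\<Sum>v\<in>V. \<Sum>k\<in>I. (x u * q u k) * Z u v * (x v * q v k)) = (\<Sum>k\<in>I. \<Sum>v\<in>V. (x u * q u k) * Z u v * (x v * q v k))"
      by (rule sum.swap)
    hence "(\<Sum>u\<in>V. \<Sum>v\<in>V. \<Sum>k\<in>I. (x u * q u k) * Z u v * (x v * q v k)) = (\<Sum>u\<in>V. \<Sum>k\<in>I. \<Sum>v\<in>V. (x u * q u k) * Z u v * (x v * q v k))"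
      by simp
    also have "\<dots> = (\<Sum>k\<in>I. \<Sum>u\<in>V. \<Sum>v\<in>V. (x u * q u k) * Z u v * (x v * q v k))" by (rule sum.swap)
    finally show ?thesis .
  qed
  also have "\<dots> = (\<Sum>k\<in>I. quad V Z (\<lambda>u. x u * q u k))"
    unfolding quad_def ..
  finally show ?thesis .
qed

lemma theta_trick:
  fixes p q :: "nat \<Rightarrow> 'i \<Rightarrow> real"
  assumes g: "fin_graph V E" and V: "V \<noteq> {}" and Z: "psd V Z" and Ze: "\<forall>(u,v)\<in>E. Z u v = -1"
    and Zd: "\<forall>u\<in>V. Z u u = lam - 1" and I: "finite I" and D: "D > 0"
    and diag: "\<forall>u\<in>V. (\<Sum>k\<in>I. (p u k)^2) + (lam - 1) * (\<Sum>k\<in>I. (q u k)^2) \<le> D"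
  shows "(\<Sum>(u,v)\<in>edges E. A u v * (\<Sum>k\<in>I. p u k * p v k - q u k * q v k)) \<le> D * SDP_inf V E A"
proof -
  have fV: "finite V" using g unfolding fin_graph_def by simp
  define M where "M = (\<lambda>u v. (\<Sum>k\<in>I. p u k * p v k) + Z u v * (\<Sum>k\<in>I. q u k * q v k))"
  have pM: "psd V M"
    unfolding psd_iff
  proof
    show "sym_mat V M" unfolding sym_mat_def M_def using psd_sym[OF Z]
      by (simp add: mult.commute)
    show "\<forall>x. 0 \<le> quad V M x"
    proof
      fix x
      have "quad V M x = quad V (\<lambda>u v. \<Sum>k\<in>I. p u k * p v k) x + quad V (\<lambda>u v. Z u v * (\<Sum>k\<in>I. q u k * q v k)) x"
        unfolding quad_def M_def by (simp add: algebra_simps sum.distrib)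
      also have "\<dots> = (\<Sum>k\<in>I. (\<Sum>u\<in>V. x u * p u k)^2) + (\<Sum>k\<in>I. quad V Z (\<lambda>u. x u * q u k))"
        using quad_gram[OF fV I] quad_schur[OF fV I] by simp
      also have "\<dots> \<ge> 0"
      proof -
        have "(\<Sum>k\<in>I. quad V Z (\<lambda>u. x u * q u k)) \<ge> 0"
          by (rule sum_nonneg) (use Z in \<open>simp add: psd_iff\<close>)
        moreover have "(\<Sum>k\<in>I. (\<Sum>u\<in>V. x u * p u k)^2) \<ge> 0" by (rule sum_nonneg) simp
        ultimately show ?thesis by simp
      qed
      finally show "0 \<le> quad V M x" .
    qed
  qed
  have dM: "\<forall>u\<in>V. M u u \<le> D"
  proof
    fix u assume u: "u \<in> V"
    have "M u u = (\<Sum>k\<in>I. (p u k)^2) + (lam - 1) * (\<Sum>k\<in>I. (q u k)^2)"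
      unfolding M_def using Zd u by (simp add: power2_eq_square)
    thus "M u u \<le> D" using diag u by simp
  qed
  have "(\<Sum>(u,v)\<in>edges E. A u v * (\<Sum>k\<in>I. p u k * p v k - q u k * q v k)) = (\<Sum>(u,v)\<in>edges E. A u v * M u v)"
  proof (rule sum.cong)
    fix e assume e: "e \<in> edges E"
    obtain u v where uv: "e = (u,v)" by force
    have "(u,v) \<in> E" using e uv unfolding edges_def by simp
    hence "Z u v = -1" using Ze by blast
    hence "M u v = (\<Sum>k\<in>I. p u k * p v k - q u k * q v k)"
      unfolding M_def by (simp add: sum_subtractf)
    thus "(case e of (u,v) \<Rightarrow> A u v * (\<Sum>k\<in>I. p u k * p v k - q u k * q v k)) = (case e of (u,v) \<Rightarrow> A u v * M u v)"
      by (simp add: uv)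
  qed simp
  also have "\<dots> \<le> D * SDP_inf V E A" by (rule psd_bound[OF g V pM D dM])
  finally show ?thesis .
qed


lemma fact_double_ge: "2^n * fact n \<le> (fact (2*n) :: real)"
proof (induction n)
  case 0 thus ?case by simp
next
  case (Suc n)
  have "fact (2 * Suc n) = (of_nat (2*n+2) * of_nat (2*n+1)) * (fact (2*n) :: real)"
    by (simp add: fact_Suc algebra_simps numeral_eq_Suc)
  also have "\<dots> \<ge> (2 * of_nat (Suc n)) * (2^n * fact n)"
    by (rule mult_mono) (use Suc.IH in auto)
  finally show ?case by (simp add: fact_Suc algebra_simps)
qed

lemma cosh_series: "(\<lambda>n. y^(2*n) / fact (2*n)) sums cosh (y::real)"
proof -
  have "(\<lambda>n. (\<lambda>m. if even m then y^m /\<^sub>R fact m else 0) (2*n)) sums cosh y \<longleftrightarrow>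
        (\<lambda>m. if even m then y^m /\<^sub>R fact m else 0) sums cosh y"
  proof (rule sums_mono_reindex)
    show "strict_mono (\<lambda>n::nat. 2*n)" by (rule strict_monoI) simp
    fix n :: nat assume "n \<notin> range (\<lambda>n. 2*n)"
    hence "odd n" by (metis evenE rangeI)
    thus "(if even n then y^n /\<^sub>R fact n else 0) = 0" by simp
  qed
  moreover have "(\<lambda>n. (\<lambda>m. if even m then y^m /\<^sub>R fact m else 0) (2*n)) = (\<lambda>n. y^(2*n) / fact (2*n))"
    by (simp add: field_simps)
  ultimately show ?thesis using cosh_converges[of y] by simp
qed

lemma cosh_le_exp: "cosh (y::real) \<le> exp (y^2/2)"
proof -
  have e: "(\<lambda>n. (y^2/2)^n / fact n) sums exp (y^2/2)"
  proof -
    have "(\<lambda>n. (y^2/2)^n /\<^sub>R fact n) = (\<lambda>n. (y^2/2)^n / fact n)"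
      by (simp add: field_simps)
    thus ?thesis using exp_converges[of "y^2/2"] by simp
  qed
  show ?thesis
  proof (rule sums_le[OF _ cosh_series e])
    fix n
    have "y^(2*n) = (y^2)^n" by (simp add: power_mult)
    moreover have "(y^2/2)^n / fact n = (y^2)^n / (2^n * fact n)" by (simp add: power_divide)
    moreover have "(y^2)^n / fact (2*n) \<le> (y^2)^n / (2^n * fact n)"
      by (rule divide_left_mono) (use fact_double_ge[of n] in auto)
    ultimately show "y^(2*n) / fact (2*n) \<le> (y^2/2)^n / fact n" by simp
  qed
qed

lemma term_le_cosh: "y^(2*k) / fact (2*k) \<le> cosh (y::real)"
proof -
  have s: "summable (\<lambda>n. y^(2*n) / fact (2*n))" using cosh_series sums_summable by blast
  have nn: "\<And>n. 0 \<le> y^(2*n) / fact (2*n)" by (simp add: power_mult)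
  have "y^(2*k) / fact (2*k) \<le> (\<Sum>n<Suc k. y^(2*n) / fact (2*n))"
    using nn by (simp add: sum_nonneg)
  also have "\<dots> \<le> (\<Sum>n. y^(2*n) / fact (2*n))" by (rule sum_le_suminf[OF s]) (use nn in auto)
  also have "\<dots> = cosh y" using cosh_series sums_unique by metis
  finally show ?thesis .
qed

lemma fact_le_pow: "fact (k + m) \<le> fact k * (of_nat (k + m) :: real)^m"
proof (induction m)
  case 0 thus ?case by simp
next
  case (Suc m)
  have "fact (k + Suc m) = of_nat (k + Suc m) * (fact (k + m) :: real)" by (simp add: fact_Suc)
  also have "\<dots> \<le> of_nat (k + Suc m) * (fact k * (of_nat (k + m))^m)"
    by (rule mult_left_mono) (use Suc.IH in auto)
  also have "\<dots> \<le> of_nat (k + Suc m) * (fact k * (of_nat (k + Suc m))^m)"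
    by (intro mult_left_mono power_mono) auto
  finally show ?case by (simp add: algebra_simps)
qed


definition Sg :: "nat \<Rightarrow> (nat \<Rightarrow> real) set" where
  "Sg N = PiE {..<N} (\<lambda>_. {-1, 1})"

definition sv :: "nat \<Rightarrow> (nat \<Rightarrow> real) \<Rightarrow> (nat \<Rightarrow> real) \<Rightarrow> real" where
  "sv N \<sigma> x = (\<Sum>j<N. \<sigma> j * x j)"

lemma card_Sg: "card (Sg N) = 2^N"
  unfolding Sg_def by (simp add: card_PiE numeral_2_eq_2)

lemma fin_Sg: "finite (Sg N)"
  unfolding Sg_def by (simp add: finite_PiE)

lemma Sg_prod: fixes f :: "nat \<Rightarrow> real \<Rightarrow> real" shows "(\<Sum>\<sigma>\<in>Sg N. \<Prod>j<N. f j (\<sigma> j)) = (\<Prod>j<N. f j 1 + f j (-1))"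
proof -
  have "(\<Prod>j<N. \<Sum>s\<in>{-1,1::real}. f j s) = (\<Sum>\<sigma>\<in>Sg N. \<Prod>j<N. f j (\<sigma> j))"
    unfolding Sg_def using prod_sum_PiE[of "{..<N}" "\<lambda>_. {-1,1::real}" f] by simp
  moreover have "\<And>j. (\<Sum>s\<in>{-1,1::real}. f j s) = f j 1 + f j (-1)" by simp
  ultimately show ?thesis by simp
qed

lemma Sg_mgf:
  assumes x: "(\<Sum>j<N. (x j)^2) \<le> 1"
  shows "(\<Sum>\<sigma>\<in>Sg N. exp (l * sv N \<sigma> x)) \<le> 2^N * exp (l^2/2)"
proof -
  have "(\<Sum>\<sigma>\<in>Sg N. exp (l * sv N \<sigma> x)) = (\<Sum>\<sigma>\<in>Sg N. \<Prod>j<N. exp (l * x j * \<sigma> j))"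
    unfolding sv_def sum_distrib_left by (simp add: exp_sum mult_ac)
  also have "\<dots> = (\<Prod>j<N. exp (l * x j * 1) + exp (l * x j * (-1)))" by (rule Sg_prod)
  also have "\<dots> = (\<Prod>j<N. 2 * cosh (l * x j))" by (rule prod.cong) (simp_all add: cosh_def)
  also have "\<dots> \<le> (\<Prod>j<N. 2 * exp ((l * x j)^2/2))"
  proof (rule prod_mono)
    fix j show "0 \<le> 2 * cosh (l * x j) \<and> 2 * cosh (l * x j) \<le> 2 * exp ((l * x j)^2/2)"
      using cosh_le_exp[of "l * x j"] cosh_real_pos[of "l * x j"] by linarith
  qed
  also have "\<dots> = 2^N * exp (l^2/2 * (\<Sum>j<N. (x j)^2))"
    by (simp add: prod.distrib exp_sum sum_distrib_left power_mult_distrib)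
  also have "\<dots> \<le> 2^N * exp (l^2/2)"
    using x by (simp add: mult_left_le)
  finally show ?thesis .
qed

lemma Sg_moment:
  assumes x: "(\<Sum>j<N. (x j)^2) \<le> 1" and k: "k \<ge> 1"
  shows "(\<Sum>\<sigma>\<in>Sg N. (sv N \<sigma> x)^(2*k)) / fact k \<le> 2^N * exp 1 ^ k"
proof -
  define l where "l = sqrt (2 * real k)"
  have lpos: "l > 0" unfolding l_def using k by simp
  have l2: "l^2 = 2 * real k" unfolding l_def by simp
  have "\<And>\<sigma>. (l * sv N \<sigma> x)^(2*k) \<le> fact (2*k) * ((exp (l * sv N \<sigma> x) + exp (- (l * sv N \<sigma> x))) / 2)"
  proof -
    fix \<sigma>
    have "(l * sv N \<sigma> x)^(2*k) / fact (2*k) \<le> cosh (l * sv N \<sigma> x)" by (rule term_le_cosh)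
    thus "(l * sv N \<sigma> x)^(2*k) \<le> fact (2*k) * ((exp (l * sv N \<sigma> x) + exp (- (l * sv N \<sigma> x))) / 2)"
      by (simp add: cosh_def divide_le_eq mult.commute)
  qed
  hence "(\<Sum>\<sigma>\<in>Sg N. (l * sv N \<sigma> x)^(2*k)) \<le> (\<Sum>\<sigma>\<in>Sg N. fact (2*k) * ((exp (l * sv N \<sigma> x) + exp (- (l * sv N \<sigma> x))) / 2))"
    by (rule sum_mono)
  also have "\<dots> = fact (2*k) * ((\<Sum>\<sigma>\<in>Sg N. exp (l * sv N \<sigma> x)) + (\<Sum>\<sigma>\<in>Sg N. exp ((-l) * sv N \<sigma> x))) / 2"
  proof -
    have "(\<Sum>\<sigma>\<in>Sg N. fact (2*k) * ((exp (l * sv N \<sigma> x) + exp (- (l * sv N \<sigma> x))) / 2))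
        = fact (2*k) * (\<Sum>\<sigma>\<in>Sg N. exp (l * sv N \<sigma> x) + exp ((-l) * sv N \<sigma> x)) / 2"
      unfolding sum_distrib_left[symmetric] sum_divide_distrib[symmetric] by simp
    thus ?thesis unfolding sum.distrib .
  qed
  also have "\<dots> \<le> fact (2*k) * (2^N * exp (l^2/2) + 2^N * exp ((-l)^2/2)) / 2"
    by (intro divide_right_mono mult_left_mono add_mono Sg_mgf x) auto
  also have "\<dots> = fact (2*k) * 2^N * exp 1 ^ k"
  proof -
    have "exp (l^2/2) = exp (real k * 1)" using l2 by simp
    also have "\<dots> = exp 1 ^ k" by (rule exp_of_nat_mult)
    finally have "exp (l^2/2) = exp 1 ^ k" .
    moreover have "(-l)^2 = l^2" by simp
    ultimately show ?thesis by simp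
  qed
  finally have A0: "(\<Sum>\<sigma>\<in>Sg N. (l * sv N \<sigma> x)^(2*k)) \<le> fact (2*k) * 2^N * exp 1 ^ k" .
  have "(\<Sum>\<sigma>\<in>Sg N. (l * sv N \<sigma> x)^(2*k)) = l^(2*k) * (\<Sum>\<sigma>\<in>Sg N. (sv N \<sigma> x)^(2*k))"
    unfolding power_mult_distrib sum_distrib_left ..
  hence A: "l^(2*k) * (\<Sum>\<sigma>\<in>Sg N. (sv N \<sigma> x)^(2*k)) \<le> fact (2*k) * 2^N * exp 1 ^ k"
    using A0 by simp
  have lk: "l^(2*k) = (2 * real k)^k"
  proof -
    have "l^(2*k) = (l^2)^k" by (rule power_mult)
    thus ?thesis using l2 by simp
  qed
  have fk: "fact (2*k) \<le> fact k * (2 * real k)^k"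
  proof -
    have "2*k = k + k" by simp
    hence "fact (2*k) = (fact (k+k) :: real)" by (simp only:)
    also have "\<dots> \<le> fact k * (of_nat (k+k))^k" by (rule fact_le_pow)
    also have "(of_nat (k+k) :: real) = 2 * real k" by simp
    finally show ?thesis .
  qed
  define S where "S = (\<Sum>\<sigma>\<in>Sg N. (sv N \<sigma> x)^(2*k))"
  define c where "c = (2 * real k)^k"
  have cpos: "c > 0" unfolding c_def using k by simp
  have A': "c * S \<le> fact (2*k) * 2^N * exp 1 ^ k" using A unfolding lk S_def c_def .
  have "fact (2*k) * 2^N * exp 1 ^ k \<le> fact k * c * 2^N * exp 1 ^ k"
    using fk unfolding c_def by (intro mult_right_mono) auto
  hence "c * S \<le> fact k * c * 2^N * exp 1 ^ k" using A' by linarith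
  hence "c * S \<le> c * (fact k * 2^N * exp 1 ^ k)" by (simp add: mult_ac)
  hence "S \<le> fact k * 2^N * exp 1 ^ k" using cpos by (simp add: mult_le_cancel_left_pos)
  hence "S / fact k \<le> 2^N * exp 1 ^ k" by (simp add: divide_le_eq mult_ac)
  thus ?thesis unfolding S_def .
qed


lemma Sg_expsq:
  assumes x: "(\<Sum>j<N. (x j)^2) \<le> 1" and t: "t \<ge> 0" "t * exp 1 < 1"
  shows "(\<Sum>\<sigma>\<in>Sg N. exp (t * (sv N \<sigma> x)^2)) \<le> 2^N / (1 - t * exp 1)"
proof -
  define a where "a = (\<lambda>\<sigma> k. (t * (sv N \<sigma> x)^2)^k / fact k)"
  have sa: "\<And>\<sigma>. a \<sigma> sums exp (t * (sv N \<sigma> x)^2)"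
  proof -
    fix \<sigma>
    have "(\<lambda>k. (t * (sv N \<sigma> x)^2)^k /\<^sub>R fact k) = a \<sigma>" unfolding a_def by (simp add: field_simps)
    thus "a \<sigma> sums exp (t * (sv N \<sigma> x)^2)" using exp_converges[of "t * (sv N \<sigma> x)^2"] by simp
  qed
  have summ: "\<And>\<sigma>. summable (a \<sigma>)" using sa sums_summable by blast
  have "(\<Sum>\<sigma>\<in>Sg N. exp (t * (sv N \<sigma> x)^2)) = (\<Sum>\<sigma>\<in>Sg N. suminf (a \<sigma>))"
    using sa sums_unique by (metis)
  also have "\<dots> = (\<Sum>k. \<Sum>\<sigma>\<in>Sg N. a \<sigma> k)" by (rule suminf_sum[symmetric]) (use summ in auto)
  also have "\<dots> \<le> (\<Sum>k. 2^N * (t * exp 1)^k)"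
  proof (rule suminf_le)
    fix k
    show "(\<Sum>\<sigma>\<in>Sg N. a \<sigma> k) \<le> 2^N * (t * exp 1)^k"
    proof (cases "k = 0")
      case True thus ?thesis unfolding a_def by (simp add: card_Sg)
    next
      case False
      hence k: "k \<ge> 1" by simp
      have "(\<Sum>\<sigma>\<in>Sg N. a \<sigma> k) = t^k * ((\<Sum>\<sigma>\<in>Sg N. (sv N \<sigma> x)^(2*k)) / fact k)"
        unfolding a_def sum_divide_distrib sum_distrib_left
        by (rule sum.cong) (simp_all add: power_mult_distrib power_mult)
      also have "\<dots> \<le> t^k * (2^N * exp 1 ^ k)"
        by (rule mult_left_mono[OF Sg_moment[OF x k]]) (use t in simp)
      also have "\<dots> = 2^N * (t * exp 1)^k" by (simp add: power_mult_distrib)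
      finally show ?thesis .
    qed
  next
    show "summable (\<lambda>k. \<Sum>\<sigma>\<in>Sg N. a \<sigma> k)" by (rule summable_sum) (use summ in auto)
    show "summable (\<lambda>k. 2^N * (t * exp 1)^k :: real)"
      by (rule summable_mult, rule summable_geometric) (use t in simp)
  qed
  also have "\<dots> = 2^N * (1 / (1 - t * exp 1))"
    by (subst suminf_mult, rule summable_geometric, use t in simp, subst suminf_geometric) (use t in simp_all)
  finally show ?thesis by simp
qed

definition Om :: "nat \<Rightarrow> nat \<Rightarrow> (nat \<Rightarrow> nat \<Rightarrow> real) set" where
  "Om r N = PiE {..<r} (\<lambda>_. Sg N)"

definition nrm :: "nat \<Rightarrow> nat \<Rightarrow> (nat \<Rightarrow> nat \<Rightarrow> real) \<Rightarrow> (nat \<Rightarrow> real) \<Rightarrow> real" where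
  "nrm r N \<omega> x = (\<Sum>i<r. (sv N (\<omega> i) x)^2)"

lemma card_Om: "card (Om r N) = (2^N)^r"
  unfolding Om_def by (simp add: card_PiE card_Sg)

lemma fin_Om: "finite (Om r N)"
  unfolding Om_def by (simp add: finite_PiE fin_Sg)

lemma Om_prod:
  fixes f :: "nat \<Rightarrow> (nat \<Rightarrow> real) \<Rightarrow> real"
  shows "(\<Sum>\<omega>\<in>Om r N. \<Prod>i<r. f i (\<omega> i)) = (\<Prod>i<r. \<Sum>\<sigma>\<in>Sg N. f i \<sigma>)"
  unfolding Om_def using prod_sum_PiE[of "{..<r}" "\<lambda>_. Sg N" f] fin_Sg by simp

lemma Om_exp:
  assumes x: "(\<Sum>j<N. (x j)^2) \<le> 1"
  shows "(\<Sum>\<omega>\<in>Om r N. exp (nrm r N \<omega> x / 6)) \<le> (2^N * 2)^r"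
proof -
  have t: "(1/6::real) * exp 1 < 1" using exp_le by simp
  have "(\<Sum>\<omega>\<in>Om r N. exp (nrm r N \<omega> x / 6)) = (\<Sum>\<omega>\<in>Om r N. \<Prod>i<r. exp ((1/6) * (sv N (\<omega> i) x)^2))"
    unfolding nrm_def by (simp add: exp_sum sum_divide_distrib)
  also have "\<dots> = (\<Prod>i<r. \<Sum>\<sigma>\<in>Sg N. exp ((1/6) * (sv N \<sigma> x)^2))" by (rule Om_prod)
  also have "\<dots> \<le> (\<Prod>i<r. 2^N * 2)"
  proof (rule prod_mono)
    fix i
    have "(\<Sum>\<sigma>\<in>Sg N. exp ((1/6) * (sv N \<sigma> x)^2)) \<le> 2^N / (1 - (1/6) * exp 1)"
      by (rule Sg_expsq[OF x]) (use t in auto)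
    also have "\<dots> \<le> 2^N * 2"
    proof -
      have "1 - (1/6) * exp 1 \<ge> (1/2::real)" using exp_le by simp
      thus ?thesis by (simp add: divide_le_eq)
    qed
    finally show "0 \<le> (\<Sum>\<sigma>\<in>Sg N. exp ((1/6) * (sv N \<sigma> x)^2)) \<and> (\<Sum>\<sigma>\<in>Sg N. exp ((1/6) * (sv N \<sigma> x)^2)) \<le> 2^N * 2"
      by (simp add: sum_nonneg)
  qed
  also have "\<dots> = (2^N * 2)^r" by simp
  finally show ?thesis .
qed

lemma tail_pt:
  fixes t y R2 :: real
  assumes t: "t > 0" and R: "R2 \<ge> 0" and y: "y > R2"
  shows "y \<le> (2/t) * exp (- t * R2 / 2) * exp (t * y)"
proof -
  have e1: "exp (t*y/2) \<ge> t*y/2" using exp_ge_add_one_self[of "t*y/2"] by linarith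
  have e2: "exp (t*y/2) * exp (- t * R2 / 2) \<ge> 1"
  proof -
    have "exp (t*y/2) * exp (- t * R2 / 2) = exp (t*(y - R2)/2)" by (simp add: exp_add[symmetric] algebra_simps)
    also have "\<dots> \<ge> 1" using t y by simp
    finally show ?thesis .
  qed
  have "(2/t) * exp (- t * R2 / 2) * exp (t * y) = (2/t) * exp (t*y/2) * (exp (t*y/2) * exp (- t * R2 / 2))"
    by (simp add: exp_add[symmetric] algebra_simps)
  also have "\<dots> \<ge> (2/t) * (t*y/2) * 1"
    using e1 e2 t y R by (intro mult_mono) auto
  finally show ?thesis using t by simp
qed

lemma Om_tail:
  assumes x: "(\<Sum>j<N. (x j)^2) \<le> 1" and R: "R2 \<ge> 0"
  shows "(\<Sum>\<omega>\<in>Om r N. if nrm r N \<omega> x > R2 then nrm r N \<omega> x else 0) \<le> 12 * exp (- R2 / 12) * (2^N * 2)^r"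
proof -
  have "(\<Sum>\<omega>\<in>Om r N. if nrm r N \<omega> x > R2 then nrm r N \<omega> x else 0) \<le> (\<Sum>\<omega>\<in>Om r N. 12 * exp (- R2 / 12) * exp (nrm r N \<omega> x / 6))"
  proof (rule sum_mono)
    fix \<omega>
    show "(if nrm r N \<omega> x > R2 then nrm r N \<omega> x else 0) \<le> 12 * exp (- R2 / 12) * exp (nrm r N \<omega> x / 6)"
    proof (cases "nrm r N \<omega> x > R2")
      case True
      have "nrm r N \<omega> x \<le> (2/(1/6)) * exp (- (1/6) * R2 / 2) * exp ((1/6) * nrm r N \<omega> x)"
        by (rule tail_pt) (use True R in auto)
      thus ?thesis using True by simp
    qed simp
  qed
  also have "\<dots> = 12 * exp (- R2 / 12) * (\<Sum>\<omega>\<in>Om r N. exp (nrm r N \<omega> x / 6))"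
    by (simp add: sum_distrib_left)
  also have "\<dots> \<le> 12 * exp (- R2 / 12) * (2^N * 2)^r"
    by (rule mult_left_mono[OF Om_exp[OF x]]) simp
  finally show ?thesis .
qed

lemma Om_single:
  fixes h :: "(nat \<Rightarrow> real) \<Rightarrow> real"
  assumes i: "i < r"
  shows "(\<Sum>\<omega>\<in>Om r N. h (\<omega> i)) = (\<Sum>\<sigma>\<in>Sg N. h \<sigma>) * (2^N)^(r - 1)"
proof -
  define f where "f = (\<lambda>l \<sigma>. if l = i then h \<sigma> else (1::real))"
  have "(\<Sum>\<omega>\<in>Om r N. h (\<omega> i)) = (\<Sum>\<omega>\<in>Om r N. \<Prod>l<r. f l (\<omega> l))"
    unfolding f_def using i by (simp add: if_distrib cong: if_cong)
  also have "\<dots> = (\<Prod>l<r. \<Sum>\<sigma>\<in>Sg N. f l \<sigma>)" by (rule Om_prod)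
  also have "\<dots> = (\<Prod>l<r. if l = i then (\<Sum>\<sigma>\<in>Sg N. h \<sigma>) else 2^N)"
    by (rule prod.cong) (simp_all add: f_def card_Sg)
  also have "\<dots> = (\<Sum>\<sigma>\<in>Sg N. h \<sigma>) * (\<Prod>l\<in>{..<r}-{i}. if l = i then (\<Sum>\<sigma>\<in>Sg N. h \<sigma>) else 2^N)"
    using i by (subst prod.remove[of _ i]) auto
  also have "(\<Prod>l\<in>{..<r}-{i}. if l = i then (\<Sum>\<sigma>\<in>Sg N. h \<sigma>) else 2^N) = (\<Prod>l\<in>{..<r}-{i}. (2::real)^N)"
    by (rule prod.cong) auto
  also have "\<dots> = (2^N)^(r-1)" using i by (simp add: card_Diff_singleton)
  finally show ?thesis .
qed

lemma Sg_pair: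
  assumes "j < N" "j' < N"
  shows "(\<Sum>\<sigma>\<in>Sg N. \<sigma> j * \<sigma> j') = (if j = j' then 2^N else 0)"
proof -
  define f where "f = (\<lambda>l (s::real). (if l = j then s else 1) * (if l = j' then s else 1))"
  have "(\<Sum>\<sigma>\<in>Sg N. \<sigma> j * \<sigma> j') = (\<Sum>\<sigma>\<in>Sg N. \<Prod>l<N. f l (\<sigma> l))"
    unfolding f_def prod.distrib using assms by simp
  also have "\<dots> = (\<Prod>l<N. f l 1 + f l (-1))" by (rule Sg_prod)
  also have "\<dots> = (if j = j' then 2^N else 0)"
  proof (cases "j = j'")
    case True
    have "(\<Prod>l<N. f l 1 + f l (-1)) = (\<Prod>l<N. 2::real)" by (rule prod.cong) (auto simp: f_def True)
    thus ?thesis using True by simp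
  next
    case False
    have "f j 1 + f j (-1) = 0" using False by (simp add: f_def)
    hence "(\<Prod>l<N. f l 1 + f l (-1)) = 0" using assms by (intro prod_zero) auto
    thus ?thesis using False by simp
  qed
  finally show ?thesis .
qed

lemma Sg_ip: "(\<Sum>\<sigma>\<in>Sg N. sv N \<sigma> x * sv N \<sigma> y) = 2^N * ip N x y"
proof -
  have "(\<Sum>\<sigma>\<in>Sg N. sv N \<sigma> x * sv N \<sigma> y) = (\<Sum>\<sigma>\<in>Sg N. \<Sum>j<N. \<Sum>j'<N. x j * y j' * (\<sigma> j * \<sigma> j'))"
    unfolding sv_def sum_product by (simp add: mult_ac)
  also have "\<dots> = (\<Sum>j<N. \<Sum>j'<N. x j * y j' * (\<Sum>\<sigma>\<in>Sg N. \<sigma> j * \<sigma> j'))"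
    unfolding sum_distrib_left
    by (subst sum.swap, rule sum.cong, simp, subst sum.swap, simp)
  also have "\<dots> = (\<Sum>j<N. \<Sum>j'<N. x j * y j' * (if j = j' then 2^N else 0))"
    by (intro sum.cong refl) (simp add: Sg_pair)
  also have "\<dots> = (\<Sum>j<N. x j * y j * 2^N)"
    by (rule sum.cong) (simp_all add: if_distrib cong: if_cong)
  also have "\<dots> = 2^N * ip N x y" unfolding ip_def by (simp add: sum_distrib_left mult_ac)
  finally show ?thesis .
qed

lemma Om_ip:
  assumes r: "r \<ge> 1"
  shows "(\<Sum>\<omega>\<in>Om r N. \<Sum>i<r. sv N (\<omega> i) x * sv N (\<omega> i) y) = real r * (2^N)^r * ip N x y"
proof -
  have "(\<Sum>\<omega>\<in>Om r N. \<Sum>i<r. sv N (\<omega> i) x * sv N (\<omega> i) y) = (\<Sum>i<r. \<Sum>\<omega>\<in>Om r N. sv N (\<omega> i) x * sv N (\<omega> i) y)"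
    by (rule sum.swap)
  also have "\<dots> = (\<Sum>i<r. 2^N * ip N x y * (2^N)^(r-1))"
  proof (rule sum.cong)
    fix i assume "i \<in> {..<r}"
    hence "i < r" by simp
    thus "(\<Sum>\<omega>\<in>Om r N. sv N (\<omega> i) x * sv N (\<omega> i) y) = 2^N * ip N x y * (2^N)^(r-1)"
      using Om_single[where h="\<lambda>\<sigma>. sv N \<sigma> x * sv N \<sigma> y" and i=i and r=r and N=N] Sg_ip[of N x y] by simp
  qed simp
  also have "\<dots> = real r * (2^N)^r * ip N x y"
  proof -
    have "(2::real)^N * (2^N)^(r-1) = (2^N)^r" using r by (simp add: power_Suc[symmetric] del: power_Suc)
    thus ?thesis by (simp add: mult_ac)
  qed
  finally show ?thesis .
qed


lemma psd_diag_nonneg: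
  assumes p: "psd V M" and fin: "finite V" and u: "u \<in> V"
  shows "M u u \<ge> 0"
proof -
  define x1 where "x1 = (\<lambda>w. if w = u then 1 else (0::real))"
  have "quad V M x1 = (\<Sum>w\<in>V. x1 w * M w u * x1 u)"
    unfolding quad_def by (rule sum.cong[OF refl], rule sum_single[OF fin u]) (simp add: x1_def)
  also have "\<dots> = x1 u * M u u * x1 u" by (rule sum_single[OF fin u]) (simp add: x1_def)
  finally have "quad V M x1 = M u u" by (simp add: x1_def)
  moreover have "quad V M x1 \<ge> 0" using p unfolding psd_iff by blast
  ultimately show ?thesis by simp
qed

lemma sq_sum_le: "(\<Sum>k\<in>I. ((x k + y k)::real)^2) \<le> 2 * (\<Sum>k\<in>I. (x k)^2) + 2 * (\<Sum>k\<in>I. (y k)^2)"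
proof -
  have "(\<Sum>k\<in>I. (x k + y k)^2) \<le> (\<Sum>k\<in>I. 2 * (x k)^2 + 2 * (y k)^2)"
  proof (rule sum_mono)
    fix k have "0 \<le> (x k - y k)^2" by simp
    thus "(x k + y k)^2 \<le> 2 * (x k)^2 + 2 * (y k)^2" by (simp add: power2_eq_square algebra_simps)
  qed
  thus ?thesis by (simp add: sum.distrib sum_distrib_left)
qed

lemma trick2:
  fixes a c :: "nat \<Rightarrow> 'i \<Rightarrow> real"
  assumes g: "fin_graph V E" and V: "V \<noteq> {}" and Z: "psd V Z" and Ze: "\<forall>(u,v)\<in>E. Z u v = -1"
    and Zd: "\<forall>u\<in>V. Z u u = lam - 1" and lam: "lam \<ge> 1" and I: "finite I"
    and na: "\<forall>u\<in>V. (\<Sum>k\<in>I. (a u k)^2) \<le> 1" and nc: "\<forall>u\<in>V. (\<Sum>k\<in>I. (c u k)^2) \<le> 1"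
    and nb: "\<forall>u\<in>V. (\<Sum>k\<in>I. (a u k - c u k)^2) \<le> 1 / (100 * lam^2)"
  shows "(\<Sum>(u,v)\<in>edges E. A u v * (\<Sum>k\<in>I. a u k * a v k - c u k * c v k)) \<le> SDP_inf V E A / 4"
proof -
  define \<tau> where "\<tau> = sqrt (10 * lam)"
  have tpos: "\<tau> > 0" unfolding \<tau>_def using lam by simp
  have t2: "\<tau>^2 = 10 * lam" unfolding \<tau>_def using lam by simp
  define p where "p = (\<lambda>u k. \<tau> * (a u k - c u k) + (a u k + c u k) / \<tau>)"
  define q where "q = (\<lambda>u k. \<tau> * (a u k - c u k) - (a u k + c u k) / \<tau>)"
  have pq: "\<And>u v k. p u k * p v k - q u k * q v k = 4 * (a u k * a v k - c u k * c v k)"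
    unfolding p_def q_def using tpos by (simp add: field_simps)
  have bnd: "\<And>u. u \<in> V \<Longrightarrow> (\<Sum>k\<in>I. (p u k)^2) \<le> 1 / lam \<and> (\<Sum>k\<in>I. (q u k)^2) \<le> 1 / lam"
  proof -
    fix u assume u: "u \<in> V"
    have "(\<Sum>k\<in>I. (a u k)^2) \<le> 1" "(\<Sum>k\<in>I. (c u k)^2) \<le> 1" using na nc u by auto
    hence d: "(\<Sum>k\<in>I. (a u k + c u k)^2) \<le> 4" using sq_sum_le[of "a u" "c u" I] by linarith
    have b: "(\<Sum>k\<in>I. (a u k - c u k)^2) \<le> 1 / (100 * lam^2)" using nb u by simp
    have key: "2 * (\<Sum>k\<in>I. (\<tau> * (a u k - c u k))^2) + 2 * (\<Sum>k\<in>I. ((a u k + c u k) / \<tau>)^2) \<le> 1 / lam"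
    proof -
      have e1: "(\<Sum>k\<in>I. (\<tau> * (a u k - c u k))^2) = \<tau>^2 * (\<Sum>k\<in>I. (a u k - c u k)^2)"
        by (simp add: power_mult_distrib sum_distrib_left)
      have e2: "(\<Sum>k\<in>I. ((a u k + c u k) / \<tau>)^2) = (\<Sum>k\<in>I. (a u k + c u k)^2) / \<tau>^2"
        by (simp add: power_divide sum_divide_distrib)
      have "\<tau>^2 * (\<Sum>k\<in>I. (a u k - c u k)^2) \<le> 10 * lam * (1 / (100 * lam^2))"
        unfolding t2 by (rule mult_left_mono[OF b]) (use lam in simp)
      also have "\<dots> = 1 / (10 * lam)" using lam by (simp add: power2_eq_square field_simps)
      finally have f1: "\<tau>^2 * (\<Sum>k\<in>I. (a u k - c u k)^2) \<le> 1 / (10 * lam)" .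
      have "(\<Sum>k\<in>I. (a u k + c u k)^2) / \<tau>^2 \<le> 4 / (10 * lam)"
        unfolding t2 by (rule divide_right_mono[OF d]) (use lam in simp)
      hence f2: "(\<Sum>k\<in>I. (a u k + c u k)^2) / \<tau>^2 \<le> 4 / (10 * lam)" .
      have "2 * (1 / (10 * lam)) + 2 * (4 / (10 * lam)) = 1 / lam" using lam by (simp add: field_simps)
      thus ?thesis unfolding e1 e2 using f1 f2 by linarith
    qed
    have "(\<Sum>k\<in>I. (p u k)^2) \<le> 2 * (\<Sum>k\<in>I. (\<tau> * (a u k - c u k))^2) + 2 * (\<Sum>k\<in>I. ((a u k + c u k) / \<tau>)^2)"
      unfolding p_def by (rule sq_sum_le)
    moreover have "(\<Sum>k\<in>I. (q u k)^2) \<le> 2 * (\<Sum>k\<in>I. (\<tau> * (a u k - c u k))^2) + 2 * (\<Sum>k\<in>I. ((a u k + c u k) / \<tau>)^2)"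
    proof -
      have "(\<Sum>k\<in>I. (q u k)^2) = (\<Sum>k\<in>I. (\<tau> * (a u k - c u k) + (- ((a u k + c u k) / \<tau>)))^2)"
        unfolding q_def by simp
      also have "\<dots> \<le> 2 * (\<Sum>k\<in>I. (\<tau> * (a u k - c u k))^2) + 2 * (\<Sum>k\<in>I. (- ((a u k + c u k) / \<tau>))^2)"
        by (rule sq_sum_le)
      finally show ?thesis by simp
    qed
    ultimately show "(\<Sum>k\<in>I. (p u k)^2) \<le> 1 / lam \<and> (\<Sum>k\<in>I. (q u k)^2) \<le> 1 / lam"
      using key by linarith
  qed
  have diag: "\<forall>u\<in>V. (\<Sum>k\<in>I. (p u k)^2) + (lam - 1) * (\<Sum>k\<in>I. (q u k)^2) \<le> 1"
  proof
    fix u assume u: "u \<in> V"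
    have "(\<Sum>k\<in>I. (p u k)^2) + (lam - 1) * (\<Sum>k\<in>I. (q u k)^2) \<le> 1 / lam + (lam - 1) * (1 / lam)"
      using bnd[OF u] lam by (intro add_mono mult_left_mono) auto
    also have "\<dots> = 1" using lam by (simp add: field_simps)
    finally show "(\<Sum>k\<in>I. (p u k)^2) + (lam - 1) * (\<Sum>k\<in>I. (q u k)^2) \<le> 1" .
  qed
  have "(\<Sum>(u,v)\<in>edges E. A u v * (\<Sum>k\<in>I. p u k * p v k - q u k * q v k)) \<le> 1 * SDP_inf V E A"
    by (rule theta_trick[OF g V Z Ze Zd I _ diag]) simp
  moreover have "(\<Sum>(u,v)\<in>edges E. A u v * (\<Sum>k\<in>I. p u k * p v k - q u k * q v k))
      = 4 * (\<Sum>(u,v)\<in>edges E. A u v * (\<Sum>k\<in>I. a u k * a v k - c u k * c v k))"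
    unfolding pq sum_distrib_left[symmetric] by (simp add: sum_distrib_left case_prod_beta algebra_simps)
  ultimately show ?thesis by simp
qed


lemma main_bound:
  fixes x :: "nat \<Rightarrow> nat \<Rightarrow> real"
  assumes g: "fin_graph V E" and V: "V \<noteq> {}" and r: "r \<ge> 1"
    and Z: "psd V Z" and Ze: "\<forall>(u,v)\<in>E. Z u v = -1" and Zd: "\<forall>u\<in>V. Z u u = lam - 1" and lam: "lam \<ge> 1"
    and R: "R2 > 0" and dl: "12 * exp (- R2 / 12) * 2^r \<le> 1 / (100 * lam^2)"
    and x: "\<forall>u\<in>V. x u \<in> usphere (card V)"
  shows "obj (card V) E A x \<le> (R2 / r) * SDP r V E A + SDP_inf V E A / 4"
proof -
  define N where "N = card V"
  define Os where "Os = Om r N"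
  define m where "m = real (card Os)"
  have m: "m = (2^N)^r" unfolding m_def Os_def by (simp add: card_Om)
  have mpos: "m > 0" unfolding m by simp
  define s where "s = sqrt (1 / (m * r))"
  have s2: "s * s = 1 / (m * r)" unfolding s_def using mpos r by simp
  define gv where "gv = (\<lambda>u (\<omega>::nat\<Rightarrow>nat\<Rightarrow>real) i. sv N (\<omega> i) (x u))"
  define nr where "nr = (\<lambda>u \<omega>. nrm r N \<omega> (x u))"
  have nr_eq: "\<And>u \<omega>. nr u \<omega> = (\<Sum>i<r. (gv u \<omega> i)^2)" unfolding nr_def nrm_def gv_def by simp
  have nr_nn: "\<And>u \<omega>. nr u \<omega> \<ge> 0" unfolding nr_eq by (simp add: sum_nonneg)
  define ph where "ph = (\<lambda>u \<omega>. if nr u \<omega> \<le> R2 then 1 else sqrt R2 / sqrt (nr u \<omega>))"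
  have ph01: "\<And>u \<omega>. 0 \<le> ph u \<omega> \<and> ph u \<omega> \<le> 1"
  proof -
    fix u \<omega>
    show "0 \<le> ph u \<omega> \<and> ph u \<omega> \<le> 1"
    proof (cases "nr u \<omega> \<le> R2")
      case False
      hence "sqrt R2 \<le> sqrt (nr u \<omega>)" by simp
      thus ?thesis using False R unfolding ph_def by (simp add: divide_le_eq_1)
    qed (simp add: ph_def)
  qed
  have phn: "\<And>u \<omega>. (ph u \<omega>)^2 * nr u \<omega> \<le> R2"
  proof -
    fix u \<omega>
    show "(ph u \<omega>)^2 * nr u \<omega> \<le> R2"
    proof (cases "nr u \<omega> \<le> R2")
      case True thus ?thesis by (simp add: ph_def)
    next
      case False
      hence "nr u \<omega> > 0" using R by simp
      thus ?thesis using False R unfolding ph_def by (simp add: power_divide)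
    qed
  qed
  have phd: "\<And>u \<omega>. (1 - ph u \<omega>)^2 * nr u \<omega> \<le> (if nr u \<omega> > R2 then nr u \<omega> else 0)"
  proof -
    fix u \<omega>
    show "(1 - ph u \<omega>)^2 * nr u \<omega> \<le> (if nr u \<omega> > R2 then nr u \<omega> else 0)"
    proof (cases "nr u \<omega> \<le> R2")
      case True thus ?thesis by (simp add: ph_def)
    next
      case False
      have "(1 - ph u \<omega>)^2 \<le> 1" using ph01[of u \<omega>] by (simp add: power_le_one abs_le_iff)
      hence "(1 - ph u \<omega>)^2 * nr u \<omega> \<le> 1 * nr u \<omega>" by (rule mult_right_mono) (rule nr_nn)
      thus ?thesis using False by simp
    qed
  qed
  define T where "T = (\<lambda>u \<omega> i. ph u \<omega> * gv u \<omega> i)"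
  define I where "I = Os \<times> {..<r}"
  have I: "finite I" unfolding I_def Os_def by (simp add: fin_Om)
  define a where "a = (\<lambda>u (k::(nat\<Rightarrow>nat\<Rightarrow>real)\<times>nat). s * gv u (fst k) (snd k))"
  define c where "c = (\<lambda>u (k::(nat\<Rightarrow>nat\<Rightarrow>real)\<times>nat). s * T u (fst k) (snd k))"
  have sumI: "\<And>f. (\<Sum>k\<in>I. f k) = (\<Sum>\<omega>\<in>Os. \<Sum>i<r. f (\<omega>, i))"
    unfolding I_def by (rule sum.cartesian_product')
  have xs: "\<And>u. u \<in> V \<Longrightarrow> (\<Sum>j<N. (x u j)^2) = 1" using x unfolding usphere_def N_def by auto
  have A1: "\<And>u v. (\<Sum>k\<in>I. a u k * a v k) = ip N (x u) (x v)"
  proof -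
    fix u v
    have "(\<Sum>k\<in>I. a u k * a v k) = (s * s) * (\<Sum>\<omega>\<in>Os. \<Sum>i<r. gv u \<omega> i * gv v \<omega> i)"
      unfolding sumI a_def by (simp add: sum_distrib_left mult_ac)
    also have "(\<Sum>\<omega>\<in>Os. \<Sum>i<r. gv u \<omega> i * gv v \<omega> i) = real r * m * ip N (x u) (x v)"
      unfolding gv_def Os_def m using Om_ip[OF r] by simp
    finally show "(\<Sum>k\<in>I. a u k * a v k) = ip N (x u) (x v)" using s2 mpos r by simp
  qed
  have A2: "\<forall>u\<in>V. (\<Sum>k\<in>I. (a u k)^2) \<le> 1"
  proof
    fix u assume u: "u \<in> V"
    have "(\<Sum>k\<in>I. (a u k)^2) = ip N (x u) (x u)" using A1[of u u] by (simp add: power2_eq_square)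
    also have "\<dots> = 1" using xs[OF u] unfolding ip_def by (simp add: power2_eq_square)
    finally show "(\<Sum>k\<in>I. (a u k)^2) \<le> 1" by simp
  qed
  have A3: "\<forall>u\<in>V. (\<Sum>k\<in>I. (c u k)^2) \<le> 1"
  proof
    fix u assume u: "u \<in> V"
    have "(\<Sum>k\<in>I. (c u k)^2) \<le> (\<Sum>k\<in>I. (a u k)^2)"
    proof (rule sum_mono)
      fix k :: "(nat\<Rightarrow>nat\<Rightarrow>real)\<times>nat"
      have "(ph u (fst k))^2 \<le> 1" using ph01[of u "fst k"] by (simp add: power_le_one)
      hence "(ph u (fst k))^2 * (s * gv u (fst k) (snd k))^2 \<le> 1 * (s * gv u (fst k) (snd k))^2"
        by (rule mult_right_mono) simp
      thus "(c u k)^2 \<le> (a u k)^2" unfolding c_def a_def T_def by (simp add: power_mult_distrib mult_ac)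
    qed
    thus "(\<Sum>k\<in>I. (c u k)^2) \<le> 1" using A2 u by force
  qed
  have A4: "\<forall>u\<in>V. (\<Sum>k\<in>I. (a u k - c u k)^2) \<le> 1 / (100 * lam^2)"
  proof
    fix u assume u: "u \<in> V"
    have "(\<Sum>k\<in>I. (a u k - c u k)^2) = (s * s) * (\<Sum>\<omega>\<in>Os. (1 - ph u \<omega>)^2 * nr u \<omega>)"
    proof -
      have "\<And>\<omega> i. (s * gv u \<omega> i - s * (ph u \<omega> * gv u \<omega> i))^2 = (s * s) * ((1 - ph u \<omega>)^2 * (gv u \<omega> i)^2)"
        by (simp add: power2_eq_square algebra_simps)
      hence "(\<Sum>k\<in>I. (a u k - c u k)^2) = (\<Sum>\<omega>\<in>Os. \<Sum>i<r. (s * s) * ((1 - ph u \<omega>)^2 * (gv u \<omega> i)^2))"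
        unfolding sumI a_def c_def T_def by simp
      thus ?thesis unfolding nr_eq by (simp add: sum_distrib_left)
    qed
    also have "\<dots> \<le> (s * s) * (\<Sum>\<omega>\<in>Os. if nr u \<omega> > R2 then nr u \<omega> else 0)"
      by (intro mult_left_mono sum_mono phd) simp
    also have "\<dots> \<le> (s * s) * (12 * exp (- R2 / 12) * (2^N * 2)^r)"
    proof -
      have "(\<Sum>j<N. (x u j)^2) \<le> 1" using xs[OF u] by simp
      from Om_tail[OF this, of R2 r] R
      have "(\<Sum>\<omega>\<in>Os. if nr u \<omega> > R2 then nr u \<omega> else 0) \<le> 12 * exp (- R2 / 12) * (2^N * 2)^r"
        unfolding Os_def nr_def by simp
      thus ?thesis by (intro mult_left_mono) auto
    qed
    also have "\<dots> = 12 * exp (- R2 / 12) * 2^r / r"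
      using s2 mpos r unfolding m by (simp add: power_mult_distrib field_simps)
    also have "\<dots> \<le> 12 * exp (- R2 / 12) * 2^r"
      using divide_left_mono[of 1 "real r" "12 * exp (- R2 / 12) * 2^r"] r by simp
    also have "\<dots> \<le> 1 / (100 * lam^2)" by (rule dl)
    finally show "(\<Sum>k\<in>I. (a u k - c u k)^2) \<le> 1 / (100 * lam^2)" .
  qed
  have A5: "(\<Sum>(u,v)\<in>edges E. A u v * (\<Sum>k\<in>I. c u k * c v k)) \<le> (R2 / r) * SDP r V E A"
  proof -
    have "(\<Sum>(u,v)\<in>edges E. A u v * (\<Sum>k\<in>I. c u k * c v k))
        = (\<Sum>(u,v)\<in>edges E. \<Sum>\<omega>\<in>Os. (s * s) * (A u v * ip r (T u \<omega>) (T v \<omega>)))"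
      unfolding sumI c_def ip_def by (simp add: sum_distrib_left mult_ac)
    also have "\<dots> = (s * s) * (\<Sum>\<omega>\<in>Os. obj r E A (\<lambda>u. T u \<omega>))"
      unfolding obj_def sum_distrib_left case_prod_beta by (rule sum.swap)
    also have "\<dots> \<le> (s * s) * (\<Sum>\<omega>\<in>Os. R2 * SDP r V E A)"
    proof (intro mult_left_mono sum_mono)
      fix \<omega>
      define y where "y = (\<lambda>u i. T u \<omega> i / sqrt R2)"
      have yb: "\<forall>u\<in>V. (\<Sum>i<r. (y u i)^2) \<le> 1"
      proof
        fix u
        have "(\<Sum>i<r. (y u i)^2) = (ph u \<omega>)^2 * nr u \<omega> / R2"
          unfolding y_def T_def nr_eq using R
          by (simp add: power_divide power_mult_distrib sum_distrib_left sum_divide_distrib)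
        also have "\<dots> \<le> 1" using phn[of u \<omega>] R by simp
        finally show "(\<Sum>i<r. (y u i)^2) \<le> 1" .
      qed
      have "obj r E A y \<le> SDP r V E A" by (rule ball_lemma[OF g r yb])
      moreover have "obj r E A (\<lambda>u. T u \<omega>) = R2 * obj r E A y"
      proof -
        have ipsc: "\<And>u v. ip r (y u) (y v) = ip r (T u \<omega>) (T v \<omega>) / R2"
          unfolding ip_def y_def sum_divide_distrib
          by (rule sum.cong[OF refl]) (use R in \<open>simp add: field_simps\<close>)
        have "obj r E A y = (\<Sum>(u,v)\<in>edges E. A u v * ip r (T u \<omega>) (T v \<omega>) / R2)"
          unfolding obj_def ipsc by simp
        also have "\<dots> = obj r E A (\<lambda>u. T u \<omega>) / R2"
          unfolding obj_def sum_divide_distrib case_prod_beta by simp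
        finally show ?thesis using R by simp
      qed
      ultimately show "obj r E A (\<lambda>u. T u \<omega>) \<le> R2 * SDP r V E A" using R by simp
    qed simp
    also have "\<dots> = (R2 / r) * SDP r V E A"
      using s2 mpos r unfolding m_def by (simp add: field_simps)
    finally show ?thesis .
  qed
  have "obj (card V) E A x = (\<Sum>(u,v)\<in>edges E. A u v * (\<Sum>k\<in>I. a u k * a v k))"
    unfolding obj_def A1 N_def ..
  also have "\<dots> = (\<Sum>(u,v)\<in>edges E. A u v * (\<Sum>k\<in>I. a u k * a v k - c u k * c v k))
        + (\<Sum>(u,v)\<in>edges E. A u v * (\<Sum>k\<in>I. c u k * c v k))"
    unfolding sum.distrib[symmetric] by (simp add: case_prod_beta sum_subtractf algebra_simps)
  also have "\<dots> \<le> SDP_inf V E A / 4 + (R2 / r) * SDP r V E A"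
    by (rule add_mono[OF trick2[OF g V Z Ze Zd lam I A2 A3 A4] A5])
  finally show ?thesis by simp
qed


lemma thetaset_bdd:
  assumes g: "fin_graph V E" and V: "V \<noteq> {}"
  shows "bdd_below {lam. \<exists>Z. psd V Z \<and> (\<forall>u\<in>V. Z u u = lam - 1) \<and> (\<forall>(u,v)\<in>E. Z u v = -1)}"
proof (rule bdd_belowI)
  fix lam assume "lam \<in> {lam. \<exists>Z. psd V Z \<and> (\<forall>u\<in>V. Z u u = lam - 1) \<and> (\<forall>(u,v)\<in>E. Z u v = -1)}"
  then obtain Z where Z: "psd V Z" "\<forall>u\<in>V. Z u u = lam - 1" by blast
  obtain u where u: "u \<in> V" using V by blast
  have "Z u u \<ge> 0" by (rule psd_diag_nonneg[OF Z(1) _ u]) (use g in \<open>simp add: fin_graph_def\<close>)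
  thus "1 \<le> lam" using Z(2) u by simp
qed

lemma Z0_psd:
  assumes fV: "finite V"
  shows "psd V (\<lambda>u v. real (card V) * (if u = v then 1 else 0) - 1)"
  unfolding psd_iff
proof
  show "sym_mat V (\<lambda>u v. real (card V) * (if u = v then 1 else 0) - 1)" unfolding sym_mat_def by auto
  show "\<forall>x. 0 \<le> quad V (\<lambda>u v. real (card V) * (if u = v then 1 else 0) - 1) x"
  proof
    fix x :: "nat \<Rightarrow> real"
    define n where "n = real (card V)"
    define S where "S = (\<Sum>u\<in>V. x u)"
    define Q where "Q = (\<Sum>u\<in>V. (x u)^2)"
    have q: "quad V (\<lambda>u v. real (card V) * (if u = v then 1 else 0) - 1) x = n * Q - S * S"
    proof -
      have "quad V (\<lambda>u v. real (card V) * (if u = v then 1 else 0) - 1) x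
          = (\<Sum>u\<in>V. \<Sum>v\<in>V. n * (if u = v then x u * x v else 0) - x u * x v)"
        unfolding quad_def n_def by (intro sum.cong refl) (simp add: algebra_simps)
      also have "\<dots> = (\<Sum>u\<in>V. n * (x u * x u) - x u * S)"
      proof (rule sum.cong[OF refl])
        fix u assume u: "u \<in> V"
        have "(\<Sum>v\<in>V. n * (if u = v then x u * x v else 0)) = (\<Sum>v\<in>V. if u = v then n * (x u * x v) else 0)"
          by (rule sum.cong) auto
        also have "\<dots> = n * (x u * x u)" using fV u by simp
        finally have a: "(\<Sum>v\<in>V. n * (if u = v then x u * x v else 0)) = n * (x u * x u)" .
        have b: "(\<Sum>v\<in>V. x u * x v) = x u * S" unfolding S_def by (simp add: sum_distrib_left)
        show "(\<Sum>v\<in>V. n * (if u = v then x u * x v else 0) - x u * x v) = n * (x u * x u) - x u * S"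
          unfolding sum_subtractf a b ..
      qed
      also have "\<dots> = n * Q - S * S"
        unfolding Q_def S_def sum_subtractf sum_distrib_left[symmetric] sum_distrib_right[symmetric]
        by (simp add: power2_eq_square)
      finally show ?thesis .
    qed
    have "0 \<le> (\<Sum>u\<in>V. \<Sum>v\<in>V. (x u - x v)^2)" by (intro sum_nonneg) simp
    also have "(\<Sum>u\<in>V. \<Sum>v\<in>V. (x u - x v)^2) = (\<Sum>u\<in>V. n * (x u)^2 - 2 * x u * S + Q)"
    proof (rule sum.cong[OF refl])
      fix u
      have "(\<Sum>v\<in>V. (x u - x v)^2) = (\<Sum>v\<in>V. (x u)^2 - 2 * x u * x v + (x v)^2)"
        by (rule sum.cong) (simp_all add: power2_eq_square algebra_simps)
      also have "\<dots> = n * (x u)^2 - 2 * x u * S + Q"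
        unfolding sum.distrib sum_subtractf by (simp add: S_def Q_def n_def sum_distrib_left)
      finally show "(\<Sum>v\<in>V. (x u - x v)^2) = n * (x u)^2 - 2 * x u * S + Q" .
    qed
    also have "\<dots> = 2 * (n * Q - S * S)"
    proof -
      have "(\<Sum>u\<in>V. n * (x u)^2) = n * Q" unfolding Q_def by (simp add: sum_distrib_left)
      moreover have "(\<Sum>u\<in>V. 2 * x u * S) = 2 * S * S" unfolding S_def by (simp add: sum_distrib_left sum_distrib_right mult_ac)
      moreover have "(\<Sum>u\<in>V. Q) = n * Q" unfolding n_def by simp
      ultimately show ?thesis unfolding sum.distrib sum_subtractf by (simp add: algebra_simps)
    qed
    finally show "0 \<le> quad V (\<lambda>u v. real (card V) * (if u = v then 1 else 0) - 1) x" unfolding q by simp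
  qed
qed

lemma theta_exists:
  assumes g: "fin_graph V E" and V: "V \<noteq> {}"
  shows "\<exists>lam Z. psd V Z \<and> (\<forall>u\<in>V. Z u u = lam - 1) \<and> (\<forall>(u,v)\<in>E. Z u v = -1) \<and> 1 \<le> lam \<and> lam < theta_compl V E + 1"
proof -
  define S where "S = {lam. \<exists>Z. psd V Z \<and> (\<forall>u\<in>V. Z u u = lam - 1) \<and> (\<forall>(u,v)\<in>E. Z u v = -1)}"
  have fV: "finite V" using g by (simp add: fin_graph_def)
  have ne: "S \<noteq> {}"
  proof -
    have "real (card V) \<in> S" unfolding S_def
    proof (intro CollectI exI conjI)
      show "psd V (\<lambda>u v. real (card V) * (if u = v then 1 else 0) - 1)" by (rule Z0_psd[OF fV])
      show "\<forall>u\<in>V. real (card V) * (if u = u then 1 else 0) - 1 = real (card V) - 1" by simp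
      show "\<forall>(u,v)\<in>E. real (card V) * (if u = v then 1 else 0) - 1 = -1"
        using g unfolding fin_graph_def by auto
    qed
    thus ?thesis by blast
  qed
  have bd: "bdd_below S" unfolding S_def by (rule thetaset_bdd[OF g V])
  have "Inf S < theta_compl V E + 1" unfolding theta_compl_def S_def by simp
  then obtain lam where lam: "lam \<in> S" "lam < theta_compl V E + 1"
    using cInf_lessD[OF ne] by blast
  then obtain Z where Z: "psd V Z" "\<forall>u\<in>V. Z u u = lam - 1" "\<forall>(u,v)\<in>E. Z u v = -1"
    unfolding S_def by blast
  have "1 \<le> lam" using bd lam(1) thetaset_bdd[OF g V] unfolding S_def
  proof -
    obtain u where u: "u \<in> V" using V by blast
    have "Z u u \<ge> 0" by (rule psd_diag_nonneg[OF Z(1) fV u])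
    thus "1 \<le> lam" using Z(2) u by simp
  qed
  thus ?thesis using Z lam by blast
qed

lemma theta_noedge:
  assumes g: "fin_graph V E" and V: "V \<noteq> {}" and E: "E = {}"
  shows "theta_compl V E \<le> 1"
  unfolding theta_compl_def
proof (rule cInf_lower)
  show "1 \<in> {lam. \<exists>Z. psd V Z \<and> (\<forall>u\<in>V. Z u u = lam - 1) \<and> (\<forall>(u,v)\<in>E. Z u v = -1)}"
  proof (intro CollectI exI[of _ "\<lambda>u v. 0"] conjI)
    show "psd V (\<lambda>u v. 0)" unfolding psd_iff sym_mat_def quad_def by simp
  qed (use E in auto)
  show "bdd_below {lam. \<exists>Z. psd V Z \<and> (\<forall>u\<in>V. Z u u = lam - 1) \<and> (\<forall>(u,v)\<in>E. Z u v = -1)}"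
    by (rule thetaset_bdd[OF g V])
qed


lemma ip_e0: "s \<ge> 1 \<Longrightarrow> ip s e0 e0 = 1"
  using e0_sphere[of s] unfolding usphere_def ip_def by (simp add: power2_eq_square)

lemma sum_single_gen:
  fixes f :: "'a \<Rightarrow> real"
  assumes "finite W" "v \<in> W" "\<And>w. w \<in> W \<Longrightarrow> w \<noteq> v \<Longrightarrow> f w = 0"
  shows "(\<Sum>w\<in>W. f w) = f v"
proof -
  have "(\<Sum>w\<in>W. f w) = f v + (\<Sum>w\<in>W-{v}. f w)" using assms(1,2) by (rule sum.remove)
  also have "(\<Sum>w\<in>W-{v}. f w) = 0" by (rule sum.neutral) (use assms(3) in auto)
  finally show ?thesis by simp
qed

lemma K_pos:
  assumes g: "fin_graph V E" and r: "r \<ge> 1" and ab: "(a,b) \<in> edges E"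
    and K: "\<forall>A. sym_mat V A \<longrightarrow> SDP_inf V E A \<le> K * SDP r V E A"
  shows "K > 0"
proof -
  have ab': "a < b" using ab unfolding edges_def by simp
  have aV: "a \<in> V" using edges_sub[OF g ab] by simp
  hence V: "V \<noteq> {}" by blast
  have fV: "finite V" using g by (simp add: fin_graph_def)
  have n1: "card V \<ge> 1" using fV V by (simp add: Suc_le_eq card_gt_0_iff)
  define A1 where "A1 = (\<lambda>u v. if (u = a \<and> v = b) \<or> (u = b \<and> v = a) then 1 else (0::real))"
  have sym: "sym_mat V A1" unfolding sym_mat_def A1_def by auto
  have ob: "\<And>s. s \<ge> 1 \<Longrightarrow> obj s E A1 (\<lambda>u. e0) = 1"
  proof -
    fix s :: nat assume s: "s \<ge> 1"
    have "obj s E A1 (\<lambda>u. e0) = (\<Sum>e\<in>edges E. A1 (fst e) (snd e))"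
      unfolding obj_def case_prod_beta ip_e0[OF s] by simp
    also have "\<dots> = A1 (fst (a,b)) (snd (a,b))"
    proof (rule sum_single_gen)
      show "finite (edges E)" by (rule fin_edges[OF g])
      show "(a,b) \<in> edges E" by (rule ab)
      fix e assume e: "e \<in> edges E" "e \<noteq> (a,b)"
      have "fst e < snd e" using e unfolding edges_def by auto
      thus "A1 (fst e) (snd e) = 0" using e ab' unfolding A1_def by (auto simp: prod_eq_iff)
    qed
    also have "\<dots> = 1" unfolding A1_def by simp
    finally show "obj s E A1 (\<lambda>u. e0) = 1" .
  qed
  have feas: "\<And>s. s \<ge> 1 \<Longrightarrow> \<forall>u\<in>V. (\<lambda>u. e0) u \<in> usphere s" using e0_sphere by simp
  have "1 \<le> SDP_inf V E A1" unfolding SDP_inf_def using SDP_upper[OF g feas[OF n1], of A1] ob[OF n1] by simp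
  moreover have "1 \<le> SDP r V E A1" using SDP_upper[OF g feas[OF r], of A1] ob[OF r] by simp
  moreover have "SDP_inf V E A1 \<le> K * SDP r V E A1" using K sym by blast
  ultimately show "K > 0"
    by (metis dual_order.trans less_numeral_extra(1) mult_nonpos_nonneg not_le order_less_le_trans zero_le_one)
qed

lemma K_main:
  assumes g: "fin_graph V E" and V: "V \<noteq> {}" and r: "r \<ge> 1" and rL: "real r \<le> ln (theta_compl V E)"
  shows "Kconst r V E \<le> 20000 * ln (theta_compl V E) / r"
proof -
  define th where "th = theta_compl V E"
  define L where "L = ln th"
  have L1: "L \<ge> 1" using rL r unfolding L_def th_def by simp
  obtain lam Z where Z: "psd V Z" "\<forall>u\<in>V. Z u u = lam - 1" "\<forall>(u,v)\<in>E. Z u v = -1"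
    and lam: "1 \<le> lam" "lam < th + 1"
    using theta_exists[OF g V] unfolding th_def by blast
  have thpos: "th > 0" using lam by simp
  have the: "th \<ge> exp 1" using L1 thpos unfolding L_def by (metis exp_le_cancel_iff exp_ln)
  have th1: "th \<ge> 1" using the exp_ge_add_one_self[of 1] by linarith
  have Ene: "E \<noteq> {}"
  proof
    assume "E = {}"
    hence "th \<le> 1" using theta_noedge[OF g V] unfolding th_def by simp
    moreover have "exp 1 > (1::real)" by simp
    ultimately show False using the by linarith
  qed
  obtain a b where ab: "(a,b) \<in> edges E"
  proof -
    obtain u v where uv: "(u,v) \<in> E" using Ene by auto
    have "u \<noteq> v" "(v,u) \<in> E" using g uv unfolding fin_graph_def by auto
    hence "(u,v) \<in> edges E \<or> (v,u) \<in> edges E" using uv unfolding edges_def by auto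
    thus ?thesis using that by blast
  qed
  have fV: "finite V" using g by (simp add: fin_graph_def)
  have n1: "card V \<ge> 1" using fV V by (simp add: Suc_le_eq card_gt_0_iff)
  define R2 where "R2 = 12 * (real r + ln (1200 * lam^2))"
  have l2: "lam^2 \<ge> 1" using lam(1) by (simp add: one_le_power)
  have "1200 * lam^2 > 1" using l2 by linarith
  hence lnpos: "ln (1200 * lam^2) > 0" by (rule ln_gt_zero)
  have R: "R2 > 0" unfolding R2_def using lnpos by simp
  have dl: "12 * exp (- R2 / 12) * 2^r \<le> 1 / (100 * lam^2)"
  proof -
    have "exp (- R2 / 12) = exp (- real r) * exp (- ln (1200 * lam^2))"
      unfolding R2_def by (simp add: exp_add[symmetric])
    also have "exp (- ln (1200 * lam^2)) = 1 / (1200 * lam^2)"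
      using lam by (simp add: exp_minus inverse_eq_divide)
    finally have e: "exp (- R2 / 12) = exp (- real r) / (1200 * lam^2)" by simp
    have "(2::real)^r \<le> exp 1 ^ r"
      using exp_ge_add_one_self[of 1] by (intro power_mono) auto
    also have "\<dots> = exp (real r)" by (simp add: exp_of_nat_mult[symmetric])
    finally have p: "(2::real)^r \<le> exp (real r)" .
    have "12 * exp (- R2 / 12) * 2^r = 12 * (exp (- real r) * 2^r) / (1200 * lam^2)"
      unfolding e by simp
    also have "\<dots> \<le> 12 * 1 / (1200 * lam^2)"
    proof -
      have "exp (- real r) * 2^r \<le> exp (- real r) * exp (real r)"
        using p by (intro mult_left_mono) auto
      also have "\<dots> = 1" by (simp add: exp_add[symmetric])
      finally have "exp (- real r) * 2^r \<le> 1" .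
      thus ?thesis using lam by (intro divide_right_mono mult_left_mono) auto
    qed
    also have "\<dots> = 1 / (100 * lam^2)" by simp
    finally show ?thesis .
  qed
  define K0 where "K0 = 4 * R2 / (3 * real r)"
  have K0set: "\<forall>A. sym_mat V A \<longrightarrow> SDP_inf V E A \<le> K0 * SDP r V E A"
  proof (intro allI impI)
    fix A :: "nat \<Rightarrow> nat \<Rightarrow> real"
    have "SDP_inf V E A \<le> (R2 / r) * SDP r V E A + SDP_inf V E A / 4"
      unfolding SDP_inf_def
    proof (rule SDP_least[OF n1])
      fix x assume x: "\<forall>u\<in>V. x u \<in> usphere (card V)"
      show "obj (card V) E A x \<le> (R2 / r) * SDP r V E A + SDP (card V) V E A / 4"
        using main_bound[OF g V r Z(1) Z(3) Z(2) lam(1) R dl x] unfolding SDP_inf_def .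
    qed
    hence "SDP_inf V E A \<le> (4/3) * ((R2 / r) * SDP r V E A)" by linarith
    thus "SDP_inf V E A \<le> K0 * SDP r V E A" unfolding K0_def by (simp add: field_simps)
  qed
  have bdd: "bdd_below {K. \<forall>A. sym_mat V A \<longrightarrow> SDP_inf V E A \<le> K * SDP r V E A}"
  proof (rule bdd_belowI)
    fix K assume "K \<in> {K. \<forall>A. sym_mat V A \<longrightarrow> SDP_inf V E A \<le> K * SDP r V E A}"
    hence "K > 0" using K_pos[OF g r ab] by blast
    thus "0 \<le> K" by simp
  qed
  have "Kconst r V E \<le> K0" unfolding Kconst_def
    by (rule cInf_lower[OF _ bdd]) (use K0set in blast)
  also have "K0 \<le> 20000 * L / r"
  proof -
    have "lam \<le> 2 * th" using lam th1 by simp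
    hence "ln lam \<le> ln (2 * th)" using lam by simp
    also have "\<dots> = ln 2 + L" unfolding L_def using thpos by (simp add: ln_mult)
    also have "ln (2::real) \<le> 1" using ln_le_minus_one[of 2] by simp
    hence "ln 2 + L \<le> 1 + L" by simp
    finally have ll: "ln lam \<le> 1 + L" .
    have "ln (1200 * lam^2) = ln 1200 + 2 * ln lam" using lam by (simp add: ln_mult ln_realpow)
    moreover have "ln (1200::real) \<le> 1199" using ln_le_minus_one[of 1200] by simp
    ultimately have "ln (1200 * lam^2) \<le> 1199 + 2 * (1 + L)" using ll by (smt (verit))
    hence "R2 \<le> 12 * (L + 1199 + 2 * (1 + L))" unfolding R2_def using rL unfolding L_def th_def by simp
    hence "R2 \<le> 12 * (1204 * L)" using L1 by (smt (verit))
    hence "4 * R2 / 3 \<le> 4 * (12 * (1204 * L)) / 3" by (intro divide_right_mono mult_left_mono) simp_all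
    also have "\<dots> = 19264 * L" by simp
    also have "\<dots> \<le> 20000 * L" using L1 by simp
    finally have "4 * R2 / 3 \<le> 20000 * L" .
    thus ?thesis unfolding K0_def using r by (simp add: divide_right_mono field_simps)
  qed
  finally show ?thesis unfolding L_def th_def .
qed


lemma empty_case:
  assumes g: "fin_graph {} E"
  shows "theta_compl {} E = Inf (UNIV::real set)" and "Kconst r {} E = Inf (UNIV::real set)"
proof -
  have E: "E = {}" using g unfolding fin_graph_def by auto
  have "{lam. \<exists>Z. psd {} Z \<and> (\<forall>u\<in>{}. Z u u = lam - 1) \<and> (\<forall>(u,v)\<in>E. Z u v = -1)} = UNIV"
    using E unfolding psd_def sym_mat_def by auto
  thus "theta_compl {} E = Inf (UNIV::real set)" unfolding theta_compl_def by simp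
  have S0: "\<And>s A. SDP s {} E A = 0"
  proof -
    fix s A
    have "{obj s E A f |f. \<forall>u\<in>{}. f u \<in> usphere s} = {0}"
      using E unfolding obj_def edges_def by auto
    thus "SDP s {} E A = 0" unfolding SDP_eq by simp
  qed
  have "{K. \<forall>A. sym_mat {} A \<longrightarrow> SDP_inf {} E A \<le> K * SDP r {} E A} = UNIV"
    unfolding SDP_inf_def S0 by simp
  thus "Kconst r {} E = Inf (UNIV::real set)" unfolding Kconst_def by simp
qed

theorem theorem6p1:
  shows "\<exists>C>0. \<forall>V E (r::nat). fin_graph V E \<longrightarrow> 1 \<le> r \<longrightarrow> real r \<le> ln (theta_compl V E)
           \<longrightarrow> Kconst r V E \<le> C * ln (theta_compl V E) / real r"
proof (intro exI[of _ "20000 + \<bar>Inf (UNIV::real set)\<bar>"] conjI allI impI)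
  define C where "C = 20000 + \<bar>Inf (UNIV::real set)\<bar>"
  show "0 < 20000 + \<bar>Inf (UNIV::real set)\<bar>" by simp
  fix V E and r :: nat
  assume g: "fin_graph V E" and r: "1 \<le> r" and rL: "real r \<le> ln (theta_compl V E)"
  have Lr: "ln (theta_compl V E) / real r \<ge> 1" using r rL by simp
  show "Kconst r V E \<le> (20000 + \<bar>Inf (UNIV::real set)\<bar>) * ln (theta_compl V E) / real r"
  proof (cases "V = {}")
    case True
    define c where "c = Inf (UNIV::real set)"
    have eq: "theta_compl V E = c" "Kconst r V E = c" using empty_case g True unfolding c_def by auto
    have "c \<le> (20000 + \<bar>c\<bar>) * 1" by simp
    also have "\<dots> \<le> (20000 + \<bar>c\<bar>) * (ln c / real r)"
      using Lr eq by (intro mult_left_mono) auto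
    finally show ?thesis using eq unfolding c_def by simp
  next
    case False
    have "Kconst r V E \<le> 20000 * ln (theta_compl V E) / r" by (rule K_main[OF g False r rL])
    also have "\<dots> = 20000 * (ln (theta_compl V E) / r)" by simp
    also have "\<dots> \<le> (20000 + \<bar>Inf (UNIV::real set)\<bar>) * (ln (theta_compl V E) / r)"
      using Lr by (intro mult_right_mono) auto
    finally show ?thesis by simp
  qed
qed


end
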